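(* Under the standing setting, assume the Poincaré inequality: there is $C>0$ such that $\|u-\overline{u}\|_{L^2(\Omega,\nu)}\le C|Du|_\nu(\Omega)$ for all $u\in BV(\Omega,d,\nu)\cap L^2(\Omega,\nu)$, where $\overline{u}=\nu(\Omega)^{-1}\int_\Omega u\,d\nu$. Let $u_0\in L^2(\Omega,\nu)$ and let $u$ be the weak solution of the Neumann problem with initial datum $u_0$. Then the extinction time $T_{ex}(u_0):=\inf\{T>0: u(t)=\overline{u_0}\ \text{for all } t\ge T\}$ satisfies $$T_{ex}(u_0)\le\frac{\|u_0\|_{L^2(\Omega,\nu)}}{\lambda_1(\mathcal{TV}_N)},\qquad \lambda_1(\mathcal{TV}_N):=\inf\Big\{\frac{\mathcal{TV}_N(u)}{\|u\|_{L^2(\Omega,\nu)}}: u\in L^2(\Omega,\nu)\setminus\{0\},\ \int_\Omega u\,d\nu=0\Big\}>0.$$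
   Context: Standing setting: $(\mathbb{X},d)$ complete separable metric space, $\nu$ a doubling Radon measure, $\mathbb{X}$ supports a weak $(1,1)$-Poincaré inequality; $\mathcal{H}$ is the codimension-one Hausdorff measure; $\Omega$ is a bounded open regular domain (finite perimeter and $|D\chi_\Omega|_\nu(\mathbb{X})=\limsup_{t\to0}\nu(\Omega\setminus\Omega_t)/t$, $\Omega_t=\{x\in\Omega:\mathrm{dist}(x,\mathbb{X}\setminus\Omega)\ge t\}$) such that each of $U=\Omega$, $U=\mathbb{X}\setminus\overline\Omega$ supports a weak $(1,1)$-Poincaré inequality, satisfies $\nu(B(x,r)\cap U)\ge C\nu(B(x,r))$ for $\mathcal{H}$-a.e. $x\in\partial U$, $r\in(0,\mathrm{diam}\,U)$, and $C^{-1}\nu(B(x,r))/r\le\mathcal{H}(B(x,r)\cap\partial U)\le C\nu(B(x,r))/r$ for $x\in\partial U$, $r\in(0,\mathrm{diam}\,U)$. $|Du|_\nu$: total variation; $\mathcal{TV}_N(u)=|Du|_\nu(\Omega)$ for $u\in BV(\Omega,d,\nu)\cap L^2(\Omega,\nu)$, $+\infty$ otherwise on $L^2(\Omega,\nu)$. The weak solution of the Neumann problem with initial datum $u_0\in L^2$ is the unique strong solution $u\in W^{1,1}(0,T;L^2(\Omega,\nu))$ of $u'(t)+\partial\mathcal{TV}_N(u(t))\ni0$, $u(0)=u_0$, where $\partial$ denotes the $L^2$-subdifferential. *)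

theory Defs
  imports "HOL-Analysis.Analysis"
begin

definition ediam :: "'a::metric_space set \<Rightarrow> ereal" where
  "ediam U = (SUP x\<in>U. SUP y\<in>U. ereal (dist x y))"

text \<open>Distance from a point to a set, with dist(x, empty) = +infinity.\<close>
definition edist_set :: "'a::metric_space \<Rightarrow> 'a set \<Rightarrow> ereal" where
  "edist_set x S = (INF y\<in>S. ereal (dist x y))"

definition inner_set :: "'a::metric_space set \<Rightarrow> real \<Rightarrow> 'a set" where
  "inner_set \<Omega> t = {x\<in>\<Omega>. edist_set x (- \<Omega>) \<ge> ereal t}"

definition doubling_radon :: "'a::metric_space measure \<Rightarrow> bool" where
  "doubling_radon \<nu> \<longleftrightarrow> sets \<nu> = sets borel \<and>
     (\<forall>x r. r > 0 \<longrightarrow> 0 < emeasure \<nu> (ball x r) \<and> emeasure \<nu> (ball x r) < \<infinity>) \<and>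
     (\<exists>Cd. \<forall>x r. r > 0 \<longrightarrow> emeasure \<nu> (ball x (2*r)) \<le> ennreal Cd * emeasure \<nu> (ball x r))"

text \<open>Codimension-one Hausdorff measure (spherical, via countable covers by balls).
  A ball of radius 0 is empty and contributes 0.\<close>
definition hcontrib :: "'a::metric_space measure \<Rightarrow> 'a \<Rightarrow> real \<Rightarrow> ennreal" where
  "hcontrib \<nu> x r = (if r = 0 then 0 else emeasure \<nu> (ball x r) / ennreal r)"

definition codim1_hausdorff_R :: "'a::metric_space measure \<Rightarrow> real \<Rightarrow> 'a set \<Rightarrow> ennreal" where
  "codim1_hausdorff_R \<nu> R A =
     (INF c\<in>{c :: nat \<Rightarrow> 'a \<times> real. (\<forall>i. 0 \<le> snd (c i) \<and> snd (c i) \<le> R) \<and>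
                A \<subseteq> (\<Union>i. ball (fst (c i)) (snd (c i)))}.
        (\<Sum>i. hcontrib \<nu> (fst (c i)) (snd (c i))))"

definition codim1_hausdorff :: "'a::metric_space measure \<Rightarrow> 'a set \<Rightarrow> ennreal" where
  "codim1_hausdorff \<nu> A = (SUP R\<in>{0<..}. codim1_hausdorff_R \<nu> R A)"

definition curve_length :: "(real \<Rightarrow> 'a::metric_space) \<Rightarrow> real \<Rightarrow> real \<Rightarrow> ereal" where
  "curve_length \<gamma> a b =
     (SUP p\<in>{(n, t). t 0 = a \<and> t n = b \<and> (\<forall>i<n. t i \<le> t (Suc i))}.
        ereal (\<Sum>i<fst p. dist (\<gamma> (snd p i)) (\<gamma> (snd p (Suc i)))))"

definition arc_length_param :: "(real \<Rightarrow> 'a::metric_space) \<Rightarrow> real \<Rightarrow> bool" where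
  "arc_length_param \<gamma> l \<longleftrightarrow>
     (\<forall>s t. 0 \<le> s \<and> s \<le> t \<and> t \<le> l \<longrightarrow> curve_length \<gamma> s t = ereal (t - s))"

definition upper_gradient :: "'a::metric_space set \<Rightarrow> ('a \<Rightarrow> real) \<Rightarrow> ('a \<Rightarrow> ennreal) \<Rightarrow> bool" where
  "upper_gradient U u g \<longleftrightarrow>
     (\<forall>l \<ge> 0. \<forall>\<gamma>. \<gamma> ` {0..l} \<subseteq> U \<and> arc_length_param \<gamma> l \<longrightarrow>
        ennreal \<bar>u (\<gamma> 0) - u (\<gamma> l)\<bar> \<le> (\<integral>\<^sup>+ s\<in>{0..l}. g (\<gamma> s) \<partial>lborel))"

definition mean :: "'a measure \<Rightarrow> 'a set \<Rightarrow> ('a \<Rightarrow> real) \<Rightarrow> real" where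
  "mean \<nu> A u = (\<integral>x\<in>A. u x \<partial>\<nu>) / measure \<nu> A"

definition weak_PI_11 :: "'a::metric_space measure \<Rightarrow> 'a set \<Rightarrow> bool" where
  "weak_PI_11 \<nu> U \<longleftrightarrow>
     (\<exists>C>0. \<exists>lam\<ge>1. \<forall>u g. u \<in> borel_measurable \<nu> \<and> g \<in> borel_measurable \<nu> \<and> upper_gradient U u g \<longrightarrow>
        (\<forall>x\<in>U. \<forall>r>0. set_integrable \<nu> (ball x (lam * r) \<inter> U) u \<longrightarrow>
           (\<integral>\<^sup>+ y\<in>ball x r \<inter> U. ennreal \<bar>u y - mean \<nu> (ball x r \<inter> U) u\<bar> \<partial>\<nu>)
               / emeasure \<nu> (ball x r \<inter> U)
           \<le> ennreal (C * r) * ((\<integral>\<^sup>+ y\<in>ball x (lam * r) \<inter> U. g y \<partial>\<nu>)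
               / emeasure \<nu> (ball x (lam * r) \<inter> U))))"

definition slope :: "('a::metric_space \<Rightarrow> real) \<Rightarrow> 'a \<Rightarrow> ennreal" where
  "slope u x = Limsup (at x) (\<lambda>y. ennreal (\<bar>u y - u x\<bar> / dist y x))"

definition loc_lipschitz_on :: "'a::metric_space set \<Rightarrow> ('a \<Rightarrow> real) \<Rightarrow> bool" where
  "loc_lipschitz_on U u \<longleftrightarrow>
     (\<forall>x\<in>U. \<exists>r>0. ball x r \<subseteq> U \<and>
        (\<exists>L. \<forall>y\<in>ball x r. \<forall>z\<in>ball x r. \<bar>u y - u z\<bar> \<le> L * dist y z))"

definition L1loc_conv :: "'a::metric_space measure \<Rightarrow> 'a set \<Rightarrow> (nat \<Rightarrow> 'a \<Rightarrow> real) \<Rightarrow> ('a \<Rightarrow> real) \<Rightarrow> bool" where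
  "L1loc_conv \<nu> U f u \<longleftrightarrow> (\<forall>i. f i \<in> borel_measurable \<nu>) \<and> u \<in> borel_measurable \<nu> \<and>
     (\<forall>x\<in>U. \<exists>r>0. ball x r \<subseteq> U \<and>
        (\<lambda>i. \<integral>\<^sup>+ y\<in>ball x r. ennreal \<bar>f i y - u y\<bar> \<partial>\<nu>) \<longlonglongrightarrow> 0)"

text \<open>Total variation |Du|_nu(U) of u on an open set U (Miranda's relaxation).\<close>
definition total_variation :: "'a::metric_space measure \<Rightarrow> 'a set \<Rightarrow> ('a \<Rightarrow> real) \<Rightarrow> ennreal" where
  "total_variation \<nu> U u =
     (INF f\<in>{f. (\<forall>i. loc_lipschitz_on U (f i)) \<and> L1loc_conv \<nu> U f u}.
        liminf (\<lambda>i. \<integral>\<^sup>+ x\<in>U. slope (f i) x \<partial>\<nu>))"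

definition memL1 :: "'a measure \<Rightarrow> 'a set \<Rightarrow> ('a \<Rightarrow> real) \<Rightarrow> bool" where
  "memL1 \<nu> U u \<longleftrightarrow> u \<in> borel_measurable \<nu> \<and> (\<integral>\<^sup>+ x\<in>U. ennreal \<bar>u x\<bar> \<partial>\<nu>) < \<infinity>"

definition memL2 :: "'a measure \<Rightarrow> 'a set \<Rightarrow> ('a \<Rightarrow> real) \<Rightarrow> bool" where
  "memL2 \<nu> U u \<longleftrightarrow> u \<in> borel_measurable \<nu> \<and> (\<integral>\<^sup>+ x\<in>U. ennreal ((u x)\<^sup>2) \<partial>\<nu>) < \<infinity>"

definition l2norm :: "'a measure \<Rightarrow> 'a set \<Rightarrow> ('a \<Rightarrow> real) \<Rightarrow> real" where
  "l2norm \<nu> U u = sqrt (enn2real (\<integral>\<^sup>+ x\<in>U. ennreal ((u x)\<^sup>2) \<partial>\<nu>))"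

definition memBV :: "'a::metric_space measure \<Rightarrow> 'a set \<Rightarrow> ('a \<Rightarrow> real) \<Rightarrow> bool" where
  "memBV \<nu> U u \<longleftrightarrow> memL1 \<nu> U u \<and> total_variation \<nu> U u < \<infinity>"

definition regular_domain :: "'a::metric_space measure \<Rightarrow> 'a set \<Rightarrow> bool" where
  "regular_domain \<nu> \<Omega> \<longleftrightarrow> open \<Omega> \<and> connected \<Omega> \<and> \<Omega> \<noteq> {} \<and> bounded \<Omega> \<and>
     total_variation \<nu> UNIV (indicator \<Omega>) < \<infinity> \<and>
     total_variation \<nu> UNIV (indicator \<Omega>) =
       Limsup (at_right 0) (\<lambda>t. emeasure \<nu> (\<Omega> - inner_set \<Omega> t) / ennreal t)"

definition boundary_conditions :: "'a::metric_space measure \<Rightarrow> 'a set \<Rightarrow> bool" where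
  "boundary_conditions \<nu> U \<longleftrightarrow>
     weak_PI_11 \<nu> U \<and>
     (\<exists>C>0. codim1_hausdorff \<nu> {x\<in>frontier U. \<not> (\<forall>r. 0 < r \<and> ereal r < ediam U \<longrightarrow>
                emeasure \<nu> (ball x r \<inter> U) \<ge> ennreal C * emeasure \<nu> (ball x r))} = 0) \<and>
     (\<exists>C>0. \<forall>x\<in>frontier U. \<forall>r. 0 < r \<and> ereal r < ediam U \<longrightarrow>
        emeasure \<nu> (ball x r) / ennreal (C * r) \<le> codim1_hausdorff \<nu> (ball x r \<inter> frontier U) \<and>
        codim1_hausdorff \<nu> (ball x r \<inter> frontier U) \<le> ennreal C * emeasure \<nu> (ball x r) / ennreal r)"

definition standing_setting :: "'a::polish_space measure \<Rightarrow> 'a set \<Rightarrow> bool" where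
  "standing_setting \<nu> \<Omega> \<longleftrightarrow> doubling_radon \<nu> \<and> weak_PI_11 \<nu> UNIV \<and>
     regular_domain \<nu> \<Omega> \<and> boundary_conditions \<nu> \<Omega> \<and> boundary_conditions \<nu> (- closure \<Omega>)"

definition TVN :: "'a::metric_space measure \<Rightarrow> 'a set \<Rightarrow> ('a \<Rightarrow> real) \<Rightarrow> ennreal" where
  "TVN \<nu> \<Omega> u = (if memBV \<nu> \<Omega> u \<and> memL2 \<nu> \<Omega> u then total_variation \<nu> \<Omega> u else \<infinity>)"

definition subdiff_TVN :: "'a::metric_space measure \<Rightarrow> 'a set \<Rightarrow> ('a \<Rightarrow> real) \<Rightarrow> ('a \<Rightarrow> real) set" where
  "subdiff_TVN \<nu> \<Omega> u = {v. memL2 \<nu> \<Omega> u \<and> memL2 \<nu> \<Omega> v \<and> TVN \<nu> \<Omega> u \<noteq> \<infinity> \<and>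
     (\<forall>w. memL2 \<nu> \<Omega> w \<longrightarrow>
        enn2ereal (TVN \<nu> \<Omega> w) \<ge> enn2ereal (TVN \<nu> \<Omega> u) + ereal (\<integral>x\<in>\<Omega>. v x * (w x - u x) \<partial>\<nu>))}"

definition abs_cont_L2 :: "'a measure \<Rightarrow> 'a set \<Rightarrow> (real \<Rightarrow> 'a \<Rightarrow> real) \<Rightarrow> real \<Rightarrow> bool" where
  "abs_cont_L2 \<nu> \<Omega> u T \<longleftrightarrow>
     (\<forall>\<epsilon>>0. \<exists>\<delta>>0. \<forall>(n::nat) a b.
        (\<forall>i<n. 0 \<le> a i \<and> a i \<le> b i \<and> b i \<le> T) \<and>
        (\<forall>i<n. \<forall>j<n. i \<noteq> j \<longrightarrow> b i \<le> a j \<or> b j \<le> a i) \<and>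
        (\<Sum>i<n. b i - a i) < \<delta> \<longrightarrow>
        (\<Sum>i<n. l2norm \<nu> \<Omega> (\<lambda>x. u (b i) x - u (a i) x)) < \<epsilon>)"

definition has_L2_deriv :: "'a measure \<Rightarrow> 'a set \<Rightarrow> (real \<Rightarrow> 'a \<Rightarrow> real) \<Rightarrow> ('a \<Rightarrow> real) \<Rightarrow> real \<Rightarrow> bool" where
  "has_L2_deriv \<nu> \<Omega> u v t \<longleftrightarrow> memL2 \<nu> \<Omega> v \<and>
     ((\<lambda>h. l2norm \<nu> \<Omega> (\<lambda>x. (u (t + h) x - u t x) / h - v x)) \<longlongrightarrow> 0) (at 0)"

text \<open>Strong solution u in W^{1,1}(0,T;L^2(Omega)) for every T>0 of
  u' + subdiff TVN (u) contains 0, u(0) = u0.\<close>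
definition TV_Neumann_solution :: "'a::metric_space measure \<Rightarrow> 'a set \<Rightarrow> ('a \<Rightarrow> real) \<Rightarrow> (real \<Rightarrow> 'a \<Rightarrow> real) \<Rightarrow> bool" where
  "TV_Neumann_solution \<nu> \<Omega> u0 u \<longleftrightarrow>
     (\<forall>t\<ge>0. memL2 \<nu> \<Omega> (u t)) \<and>
     (AE x in \<nu>. x \<in> \<Omega> \<longrightarrow> u 0 x = u0 x) \<and>
     (\<forall>T>0. abs_cont_L2 \<nu> \<Omega> u T \<and>
        (AE t in lborel. 0 < t \<and> t < T \<longrightarrow>
           (\<exists>v. has_L2_deriv \<nu> \<Omega> u v t \<and> (\<lambda>x. - v x) \<in> subdiff_TVN \<nu> \<Omega> (u t))))"

definition extinction_time :: "'a measure \<Rightarrow> 'a set \<Rightarrow> ('a \<Rightarrow> real) \<Rightarrow> (real \<Rightarrow> 'a \<Rightarrow> real) \<Rightarrow> ennreal" where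
  "extinction_time \<nu> \<Omega> u0 u =
     Inf (ennreal ` {T. T > 0 \<and> (\<forall>t\<ge>T. AE x in \<nu>. x \<in> \<Omega> \<longrightarrow> u t x = mean \<nu> \<Omega> u0)})"

definition lambda1_TVN :: "'a::metric_space measure \<Rightarrow> 'a set \<Rightarrow> ennreal" where
  "lambda1_TVN \<nu> \<Omega> =
     (INF w\<in>{w. memL2 \<nu> \<Omega> w \<and> l2norm \<nu> \<Omega> w \<noteq> 0 \<and> (\<integral>x\<in>\<Omega>. w x \<partial>\<nu>) = 0}.
        TVN \<nu> \<Omega> w / ennreal (l2norm \<nu> \<Omega> w))"

end

theory Submission imports Defs begin

definition acr :: "(real \<Rightarrow> real) \<Rightarrow> real \<Rightarrow> real \<Rightarrow> bool" where
 "acr f a b \<longleftrightarrow> (\<forall>\<epsilon>>0. \<exists>\<delta>>0. \<forall>(n::nat) p q.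
    (\<forall>i<n. a \<le> p i \<and> p i \<le> q i \<and> q i \<le> b) \<and> (\<forall>i<n. \<forall>j<n. i \<noteq> j \<longrightarrow> q i \<le> p j \<or> q j \<le> p i)
     \<and> (\<Sum>i<n. q i - p i) < \<delta> \<longrightarrow> (\<Sum>i<n. \<bar>f (q i) - f (p i)\<bar>) < \<epsilon>)"

lemma acrD:
  assumes "acr f a b" "\<epsilon> > 0"
  obtains \<delta> where "\<delta> > 0" "\<And>(n::nat) p q. (\<forall>i<n. a \<le> p i \<and> p i \<le> q i \<and> q i \<le> b) \<Longrightarrow>
     (\<forall>i<n. \<forall>j<n. i \<noteq> j \<longrightarrow> q i \<le> p j \<or> q j \<le> p i) \<Longrightarrow>
     (\<Sum>i<n. q i - p i) < \<delta> \<Longrightarrow> (\<Sum>i<n. \<bar>f (q i) - f (p i)\<bar>) < \<epsilon>"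
proof -
  from assms obtain \<delta> where "\<delta> > 0" and H: "\<forall>(n::nat) p q.
    (\<forall>i<n. a \<le> p i \<and> p i \<le> q i \<and> q i \<le> b) \<and> (\<forall>i<n. \<forall>j<n. i \<noteq> j \<longrightarrow> q i \<le> p j \<or> q j \<le> p i)
     \<and> (\<Sum>i<n. q i - p i) < \<delta> \<longrightarrow> (\<Sum>i<n. \<bar>f (q i) - f (p i)\<bar>) < \<epsilon>"
    unfolding acr_def by blast
  show ?thesis
    by (rule that[OF \<open>\<delta> > 0\<close>]) (use H in blast)
qed

lemma acr_cont:
  assumes "acr f a b" "x \<in> {a..b}" "e > 0"
  shows "\<exists>d>0. \<forall>y\<in>{a..b}. \<bar>y - x\<bar> < d \<longrightarrow> \<bar>f y - f x\<bar> < e"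
proof -
  obtain \<delta> where d: "\<delta> > 0" and H: "\<And>(n::nat) p q. (\<forall>i<n. a \<le> p i \<and> p i \<le> q i \<and> q i \<le> b) \<Longrightarrow>
     (\<forall>i<n. \<forall>j<n. i \<noteq> j \<longrightarrow> q i \<le> p j \<or> q j \<le> p i) \<Longrightarrow>
     (\<Sum>i<n. q i - p i) < \<delta> \<Longrightarrow> (\<Sum>i<n. \<bar>f (q i) - f (p i)\<bar>) < e"
    using acrD[OF assms(1,3)] by blast
  show ?thesis
  proof (intro exI[of _ \<delta>] conjI ballI impI d)
    fix y assume y: "y \<in> {a..b}" "\<bar>y - x\<bar> < \<delta>"
    have "(\<Sum>i<Suc 0. \<bar>f ((\<lambda>_. max x y) i) - f ((\<lambda>_. min x y) i)\<bar>) < e"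
      by (rule H) (use y assms(2) in auto)
    then show "\<bar>f y - f x\<bar> < e" by (cases "x \<le> y") (auto simp: max_def min_def)
  qed
qed
lemma fam_length:
  fixes n :: nat
  assumes "\<forall>i<n. p i \<le> q i" "\<forall>i<n. \<forall>j<n. i\<noteq>j \<longrightarrow> q i \<le> p j \<or> q j \<le> p i"
    "\<forall>i<n. {p i..q i} \<subseteq> G" "G \<in> sets borel"
  shows "ennreal (\<Sum>i<n. q i - p i) \<le> emeasure lborel G"
proof -
  have "disjoint_family_on (\<lambda>i. {p i<..q i}) {..<n}"
    unfolding disjoint_family_on_def
  proof (intro ballI impI)
    fix i j assume "i \<in> {..<n}" "j \<in> {..<n}" "i \<noteq> j"
    then have "q i \<le> p j \<or> q j \<le> p i" using assms(2) by auto
    then show "{p i<..q i} \<inter> {p j<..q j} = {}" by auto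
  qed
  then have U: "(\<Sum>i\<in>{..<n}. emeasure lborel {p i<..q i}) = emeasure lborel (\<Union>i\<in>{..<n}. {p i<..q i})"
    by (intro sum_emeasure) auto
  have "ennreal (\<Sum>i<n. q i - p i) = (\<Sum>i\<in>{..<n}. ennreal (q i - p i))"
    using assms(1) by (intro sum_ennreal[symmetric]) auto
  also have "\<dots> = (\<Sum>i\<in>{..<n}. emeasure lborel {p i<..q i})"
    using assms(1) by (intro sum.cong) auto
  also have "\<dots> \<le> emeasure lborel G"
    unfolding U
  proof (rule emeasure_mono)
    show "(\<Union>i\<in>{..<n}. {p i<..q i}) \<subseteq> G"
    proof (rule UN_least)
      fix i assume "i \<in> {..<n}"
      then have "{p i..q i} \<subseteq> G" using assms(3) by blast
      then show "{p i<..q i} \<subseteq> G" by (meson greaterThanAtMost_subseteq_atLeastAtMost_iff order_refl subset_trans)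
    qed
    show "G \<in> sets lborel" using assms(4) by simp
  qed
  finally show ?thesis .
qed
lemma acr_mono:
  fixes f :: "real \<Rightarrow> real"
  assumes ac: "acr f a b" and ab: "a \<le> b"
    and dini: "AE t in lborel. a < t \<and> t < b \<longrightarrow>
       (\<forall>\<epsilon>>0. \<exists>\<eta>>0. \<forall>h. 0 < h \<and> h < \<eta> \<longrightarrow> f (t + h) - f t \<le> \<epsilon> * h)"
  shows "f b \<le> f a"
proof -
  have main: "f b - f a \<le> \<epsilon> * (b - a + 1)" if e: "\<epsilon> > 0" for \<epsilon>
  proof -
    obtain \<delta> where d: "\<delta> > 0" and H: "\<And>(n::nat) p q. (\<forall>i<n. a \<le> p i \<and> p i \<le> q i \<and> q i \<le> b) \<Longrightarrow>
     (\<forall>i<n. \<forall>j<n. i \<noteq> j \<longrightarrow> q i \<le> p j \<or> q j \<le> p i) \<Longrightarrow>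
     (\<Sum>i<n. q i - p i) < \<delta> \<Longrightarrow> (\<Sum>i<n. \<bar>f (q i) - f (p i)\<bar>) < \<epsilon>"
      using acrD[OF ac e] by blast
    obtain N where N: "{t \<in> space lborel. \<not> (a < t \<and> t < b \<longrightarrow>
       (\<forall>\<epsilon>>0. \<exists>\<eta>>0. \<forall>h. 0 < h \<and> h < \<eta> \<longrightarrow> f (t + h) - f t \<le> \<epsilon> * h))} \<subseteq> N"
       "emeasure lborel N = 0" "N \<in> sets lborel"
      using AE_E[OF dini] by blast
    have Nb: "N \<union> {a} \<in> sets borel" using N(3) by auto
    obtain G where G: "open G" "N \<union> {a} \<subseteq> G" "emeasure lborel (G - (N \<union> {a})) < \<delta>"
      using outer_regular_lborel[OF Nb d] by blast
    have Gb: "G \<in> sets borel" using G(1) by auto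
    have "emeasure lborel G \<le> emeasure lborel (N \<union> {a}) + emeasure lborel (G - (N \<union> {a}))"
    proof -
      have U: "(N \<union> {a}) \<union> (G - (N \<union> {a})) \<in> sets borel" by (rule sets.Un[OF Nb sets.Diff[OF Gb Nb]])
      have "emeasure lborel G \<le> emeasure lborel ((N \<union> {a}) \<union> (G - (N \<union> {a})))"
        by (rule emeasure_mono) (use U in auto)
      also have "\<dots> \<le> emeasure lborel (N \<union> {a}) + emeasure lborel (G - (N \<union> {a}))"
        by (rule emeasure_subadditive) (use Nb Gb in auto)
      finally show ?thesis .
    qed
    also have "emeasure lborel (N \<union> {a}) = 0"
    proof -
      have "N \<in> null_sets lborel" using N(2,3) by (simp add: null_setsI)
      moreover have "{a} \<in> null_sets lborel" by (rule finite_imp_null_set_lborel) simp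
      ultimately have "N \<union> {a} \<in> null_sets lborel" by (rule null_sets.Un)
      then show ?thesis by (rule null_setsD1)
    qed
    finally have Gm: "emeasure lborel G < \<delta>" using G(3) by simp
    define Fam where "Fam x = {(\<Sum>i<(n::nat). \<bar>f (q i) - f (p i)\<bar>) | n p q.
        (\<forall>i<n. a \<le> p i \<and> p i \<le> q i \<and> q i \<le> x) \<and> (\<forall>i<n. \<forall>j<n. i \<noteq> j \<longrightarrow> q i \<le> p j \<or> q j \<le> p i)
         \<and> (\<forall>i<n. {p i..q i} \<subseteq> G)}" for x
    define V where "V x = Sup (Fam x)" for x
    have Fam_le: "s < \<epsilon>" if sF: "s \<in> Fam x" and xb: "x \<le> b" for s x
    proof -
      obtain n p q where s: "s = (\<Sum>i<(n::nat). \<bar>f (q i) - f (p i)\<bar>)"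
        "\<forall>i<n. a \<le> p i \<and> p i \<le> q i \<and> q i \<le> x" "\<forall>i<n. \<forall>j<n. i \<noteq> j \<longrightarrow> q i \<le> p j \<or> q j \<le> p i"
        "\<forall>i<n. {p i..q i} \<subseteq> G"
        using sF unfolding Fam_def by blast
      have "ennreal (\<Sum>i<n. q i - p i) \<le> emeasure lborel G"
        by (rule fam_length) (use s Gb in auto)
      then have "ennreal (\<Sum>i<n. q i - p i) < ennreal \<delta>" using Gm by simp
      then have len: "(\<Sum>i<n. q i - p i) < \<delta>" by (meson ennreal_leI not_le)
      have "\<forall>i<n. a \<le> p i \<and> p i \<le> q i \<and> q i \<le> b" using s(2) xb by force
      then show ?thesis unfolding s(1) using H s(3) len by blast
    qed
    have Fam0: "0 \<in> Fam x" for x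
      unfolding Fam_def by (rule CollectI, rule exI[of _ 0]) auto
    have bdd: "bdd_above (Fam x)" if "x \<le> b" for x
      by (rule bdd_aboveI[of _ \<epsilon>]) (use Fam_le[OF _ that] in force)
    have Fam_mono: "Fam x \<subseteq> Fam y" if "x \<le> y" for x y
    proof
      fix s assume "s \<in> Fam x"
      then obtain n p q where s: "s = (\<Sum>i<(n::nat). \<bar>f (q i) - f (p i)\<bar>)"
        "\<forall>i<n. a \<le> p i \<and> p i \<le> q i \<and> q i \<le> x" "\<forall>i<n. \<forall>j<n. i \<noteq> j \<longrightarrow> q i \<le> p j \<or> q j \<le> p i"
        "\<forall>i<n. {p i..q i} \<subseteq> G"
        unfolding Fam_def by blast
      have "\<forall>i<n. a \<le> p i \<and> p i \<le> q i \<and> q i \<le> y" using s(2) that by force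
      then show "s \<in> Fam y" unfolding Fam_def using s by blast
    qed
    have V0: "0 \<le> V x" if "x \<le> b" for x
      unfolding V_def using Fam0 bdd[OF that] by (rule cSup_upper)
    have Vle: "V x \<le> \<epsilon>" if "x \<le> b" for x
      unfolding V_def using Fam0 Fam_le[OF _ that] by (intro cSup_least) (auto intro: less_imp_le)
    have Vmono: "V x \<le> V y" if "x \<le> y" "y \<le> b" for x y
      unfolding V_def using Fam0 Fam_mono[OF that(1)] bdd[OF that(2)] by (intro cSup_subset_mono) auto
    have Vext: "V x + \<bar>f y - f x\<bar> \<le> V y" if xy: "x \<le> y" "y \<le> b" "{x..y} \<subseteq> G" and ax: "a \<le> x" for x y
    proof -
      have "\<forall>s\<in>Fam x. s \<le> V y - \<bar>f y - f x\<bar>"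
      proof
        fix s assume "s \<in> Fam x"
        then obtain n p q where s: "s = (\<Sum>i<(n::nat). \<bar>f (q i) - f (p i)\<bar>)"
          "\<forall>i<n. a \<le> p i \<and> p i \<le> q i \<and> q i \<le> x" "\<forall>i<n. \<forall>j<n. i \<noteq> j \<longrightarrow> q i \<le> p j \<or> q j \<le> p i"
          "\<forall>i<n. {p i..q i} \<subseteq> G"
          unfolding Fam_def by blast
        define p' where "p' = p(n := x)"
        define q' where "q' = q(n := y)"
        have "(\<Sum>i<Suc n. \<bar>f (q' i) - f (p' i)\<bar>) \<in> Fam y"
          unfolding Fam_def
        proof (rule CollectI, intro exI conjI)
          show "\<forall>i<Suc n. a \<le> p' i \<and> p' i \<le> q' i \<and> q' i \<le> y"
            using s(2) xy ax by (auto simp: p'_def q'_def less_Suc_eq)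
          show "\<forall>i<Suc n. \<forall>j<Suc n. i \<noteq> j \<longrightarrow> q' i \<le> p' j \<or> q' j \<le> p' i"
            using s(2,3) by (auto simp: p'_def q'_def less_Suc_eq)
          show "\<forall>i<Suc n. {p' i..q' i} \<subseteq> G"
            using s(4) xy(3) by (auto simp: p'_def q'_def less_Suc_eq)
        qed rule
        then have "(\<Sum>i<Suc n. \<bar>f (q' i) - f (p' i)\<bar>) \<le> V y"
          unfolding V_def using bdd[OF xy(2)] by (rule cSup_upper)
        moreover have "(\<Sum>i<Suc n. \<bar>f (q' i) - f (p' i)\<bar>) = s + \<bar>f y - f x\<bar>"
          unfolding s(1) by (simp add: p'_def q'_def)
        ultimately show "s \<le> V y - \<bar>f y - f x\<bar>" by simp
      qed
      then have "V x \<le> V y - \<bar>f y - f x\<bar>"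
        unfolding V_def using Fam0[of x] bdd[of x] xy by (subst cSup_le_iff) force+
      then show ?thesis by simp
    qed
    define S where "S = {x \<in> {a..b}. f x - f a \<le> \<epsilon> * (x - a) + V x}"
    have aS: "a \<in> S" unfolding S_def using ab V0[OF ab] by auto
    have bddS: "bdd_above S" unfolding S_def by (auto intro: bdd_aboveI[of _ b])
    define s where "s = Sup S"
    have as: "a \<le> s" unfolding s_def using aS bddS by (rule cSup_upper)
    have sb: "s \<le> b" unfolding s_def using aS by (intro cSup_least) (auto simp: S_def)
    have sS: "s \<in> S"
    proof -
      have "f s - f a \<le> \<epsilon> * (s - a) + V s + e" if ep: "e > 0" for e
      proof -
        obtain d where d: "d > 0" "\<And>y. y\<in>{a..b} \<Longrightarrow> \<bar>y - s\<bar> < d \<Longrightarrow> \<bar>f y - f s\<bar> < e"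
          using acr_cont[OF ac _ ep, of s] as sb by (meson atLeastAtMost_iff)
        have "s - d < Sup S" using d(1) s_def by simp
        then obtain x where x: "x \<in> S" "s - d < x" using aS by (auto elim: less_cSupE)
        have xs: "x \<le> s" unfolding s_def using x(1) bddS by (rule cSup_upper)
        have xab: "x \<in> {a..b}" "f x - f a \<le> \<epsilon> * (x - a) + V x" using x(1) by (auto simp: S_def)
        have "\<bar>f x - f s\<bar> < e" using d(2)[OF xab(1)] x(2) xs by auto
        moreover have "V x \<le> V s" using Vmono[OF xs sb] .
        moreover have "\<epsilon> * (x - a) \<le> \<epsilon> * (s - a)" using xs e by (intro mult_left_mono) auto
        ultimately show ?thesis using xab(2) by linarith
      qed
      then have "f s - f a \<le> \<epsilon> * (s - a) + V s" by (rule field_le_epsilon)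
      then show ?thesis using as sb by (auto simp: S_def)
    qed
    have "s = b"
    proof (rule ccontr)
      assume "s \<noteq> b" then have sb': "s < b" using sb by auto
      have sfs: "f s - f a \<le> \<epsilon> * (s - a) + V s" using sS by (auto simp: S_def)
      obtain y where y: "s < y" "y \<le> b" "y \<in> S"
      proof (cases "s \<in> G")
        case True
        then obtain r where r: "r > 0" "ball s r \<subseteq> G" using G(1) open_contains_ball by blast
        define y where "y = min (s + r/2) b"
        have sy: "s < y" "y \<le> b" using r sb' by (auto simp: y_def)
        have "{s..y} \<subseteq> ball s r" using r by (auto simp: y_def dist_real_def)
        then have "V s + \<bar>f y - f s\<bar> \<le> V y" using r(2) by (intro Vext) (use sy as in auto)
        moreover have "\<epsilon> * (s - a) \<le> \<epsilon> * (y - a)" using sy e by (intro mult_left_mono) auto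
        ultimately have "f y - f a \<le> \<epsilon> * (y - a) + V y" using sfs by linarith
        then have "y \<in> S" using sy as by (auto simp: S_def)
        then show ?thesis using that sy by blast
      next
        case False
        then have sN: "s \<notin> N" "s \<noteq> a" using G(2) by auto
        then have "a < s" using as by auto
        then have "\<forall>\<epsilon>>0. \<exists>\<eta>>0. \<forall>h. 0 < h \<and> h < \<eta> \<longrightarrow> f (s + h) - f s \<le> \<epsilon> * h"
        proof -
          have "s \<notin> {t \<in> space lborel. \<not> (a < t \<and> t < b \<longrightarrow>
            (\<forall>\<epsilon>>0. \<exists>\<eta>>0. \<forall>h. 0 < h \<and> h < \<eta> \<longrightarrow> f (t + h) - f t \<le> \<epsilon> * h))}"
            using N(1) sN by blast
          moreover have "s \<in> space lborel" by simp
          ultimately show ?thesis using \<open>a < s\<close> sb' by blast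
        qed
        then obtain \<eta> where eta: "\<eta> > 0" "\<And>h. 0 < h \<Longrightarrow> h < \<eta> \<Longrightarrow> f (s + h) - f s \<le> \<epsilon> * h"
          using e by blast
        define h where "h = min (\<eta>/2) ((b - s)/2)"
        have h: "0 < h" "h < \<eta>" "s + h \<le> b" using eta(1) sb' unfolding h_def by (auto simp: min_def field_simps)
        have "f (s + h) - f s \<le> \<epsilon> * h" using eta(2) h by auto
        moreover have "V s \<le> V (s + h)" using Vmono h by auto
        ultimately have "f (s + h) - f a \<le> \<epsilon> * (s + h - a) + V (s + h)" using sfs
          by (simp add: algebra_simps)
        then have "s + h \<in> S" using h as by (auto simp: S_def)
        then show ?thesis using that[of "s + h"] h by linarith
      qed
      have "y \<le> s" unfolding s_def using y(3) bddS by (rule cSup_upper)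
      then show False using y by auto
    qed
    then have "f b - f a \<le> \<epsilon> * (b - a) + V b" using sS by (auto simp: S_def)
    then show ?thesis using Vle[of b] by (simp add: algebra_simps)
  qed
  show ?thesis
  proof (rule ccontr)
    assume "\<not> f b \<le> f a"
    define \<epsilon> where "\<epsilon> = (f b - f a) / (2 * (b - a + 1))"
    have e: "\<epsilon> > 0" using \<open>\<not> f b \<le> f a\<close> ab by (auto simp: \<epsilon>_def)
    have "\<epsilon> * (b - a + 1) = (f b - f a) / 2" using ab by (simp add: \<epsilon>_def field_simps)
    then have "f b - f a \<le> (f b - f a) / 2" using main[OF e] by simp
    then show False using \<open>\<not> f b \<le> f a\<close> by (simp add: field_simps)
  qed
qed


lemma slope_shift: "slope (\<lambda>x. f x + k) = slope f"
  unfolding slope_def by simp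

lemma loclip_shift: "loc_lipschitz_on U (\<lambda>x. f x + k) = loc_lipschitz_on U f"
  unfolding loc_lipschitz_on_def by simp

lemma L1loc_shift:
  assumes "L1loc_conv \<nu> U f u"
  shows "L1loc_conv \<nu> U (\<lambda>i x. f i x + k) (\<lambda>x. u x + k)"
proof -
  have m: "\<And>i. f i \<in> borel_measurable \<nu>" "u \<in> borel_measurable \<nu>" using assms by (auto simp: L1loc_conv_def)
  have "\<And>i. (\<lambda>x. f i x + k) \<in> borel_measurable \<nu>" using m(1) by measurable
  moreover have "(\<lambda>x. u x + k) \<in> borel_measurable \<nu>" using m(2) by measurable
  ultimately show ?thesis using assms unfolding L1loc_conv_def by simp
qed

lemma tv_shift_le: "total_variation \<nu> U (\<lambda>x. u x + k) \<le> total_variation \<nu> U u"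
  unfolding total_variation_def
proof (rule INF_mono)
  fix f assume f: "f \<in> {f. (\<forall>i. loc_lipschitz_on U (f i)) \<and> L1loc_conv \<nu> U f u}"
  show "\<exists>n\<in>{f. (\<forall>i. loc_lipschitz_on U (f i)) \<and> L1loc_conv \<nu> U f (\<lambda>x. u x + k)}.
          liminf (\<lambda>i. \<integral>\<^sup>+x\<in>U. slope (n i) x \<partial>\<nu>) \<le> liminf (\<lambda>i. \<integral>\<^sup>+x\<in>U. slope (f i) x \<partial>\<nu>)"
  proof (rule bexI[of _ "\<lambda>i x. f i x + k"])
    show "liminf (\<lambda>i. \<integral>\<^sup>+x\<in>U. slope (\<lambda>x. f i x + k) x \<partial>\<nu>) \<le> liminf (\<lambda>i. \<integral>\<^sup>+x\<in>U. slope (f i) x \<partial>\<nu>)"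
      by (simp add: slope_shift)
    show "(\<lambda>i x. f i x + k) \<in> {f. (\<forall>i. loc_lipschitz_on U (f i)) \<and> L1loc_conv \<nu> U f (\<lambda>x. u x + k)}"
      using f by (simp add: loclip_shift L1loc_shift)
  qed
qed

lemma tv_shift: "total_variation \<nu> U (\<lambda>x. u x + k) = total_variation \<nu> U u"
proof (rule antisym)
  show "total_variation \<nu> U (\<lambda>x. u x + k) \<le> total_variation \<nu> U u" by (rule tv_shift_le)
  have "total_variation \<nu> U (\<lambda>x. (u x + k) + (- k)) \<le> total_variation \<nu> U (\<lambda>x. u x + k)"
    by (rule tv_shift_le)
  then show "total_variation \<nu> U u \<le> total_variation \<nu> U (\<lambda>x. u x + k)" by simp
qed

lemma slope_const: "slope (\<lambda>x. c) x = 0"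
proof -
  have "Limsup (at x) (\<lambda>y. 0::ennreal) \<le> 0" by (rule Limsup_bounded) simp
  then show ?thesis unfolding slope_def by simp
qed

lemma tv_const:
  assumes "open U"
  shows "total_variation \<nu> U (\<lambda>x. c) = 0"
proof -
  have mem: "(\<lambda>i x. c) \<in> {f. (\<forall>i. loc_lipschitz_on U (f i)) \<and> L1loc_conv \<nu> U f (\<lambda>x. c)}"
  proof (intro CollectI conjI allI)
    fix i :: nat
    show "loc_lipschitz_on U (\<lambda>x. c)"
      unfolding loc_lipschitz_on_def
    proof
      fix x assume "x \<in> U"
      then obtain r where "r > 0" "ball x r \<subseteq> U" using assms open_contains_ball by blast
      then show "\<exists>r>0. ball x r \<subseteq> U \<and> (\<exists>L. \<forall>y\<in>ball x r. \<forall>z\<in>ball x r. \<bar>c - c\<bar> \<le> L * dist y z)"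
        by (intro exI[of _ r] conjI exI[of _ 0]) auto
    qed
    show "L1loc_conv \<nu> U (\<lambda>i x. c) (\<lambda>x. c)"
      unfolding L1loc_conv_def
    proof (intro conjI ballI allI)
      fix x assume "x \<in> U"
      then obtain r where "r > 0" "ball x r \<subseteq> U" using assms open_contains_ball by blast
      then show "\<exists>r>0. ball x r \<subseteq> U \<and> (\<lambda>i. \<integral>\<^sup>+y\<in>ball x r. ennreal \<bar>c - c\<bar> \<partial>\<nu>) \<longlonglongrightarrow> 0"
        by (intro exI[of _ r]) simp
    qed auto
  qed
  have "total_variation \<nu> U (\<lambda>x. c) \<le> liminf (\<lambda>i. \<integral>\<^sup>+x\<in>U. slope ((\<lambda>i x. c) i) x \<partial>\<nu>)"
    unfolding total_variation_def by (rule INF_lower[OF mem])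
  also have "\<dots> = 0" by (simp add: slope_const Liminf_const)
  finally show ?thesis by simp
qed


lemma tend_extract:
  fixes e :: "real \<Rightarrow> real"
  assumes "(e \<longlongrightarrow> 0) (at 0)" "r > 0"
  shows "\<exists>\<eta>>0. \<forall>h. 0 < h \<and> h < \<eta> \<longrightarrow> \<bar>e h\<bar> < r"
proof -
  have "eventually (\<lambda>h. dist (e h) 0 < r) (at 0)" using assms tendsto_iff by blast
  then obtain d where d: "d > 0" "\<And>h. h \<noteq> 0 \<Longrightarrow> dist h 0 < d \<Longrightarrow> dist (e h) 0 < r"
    unfolding eventually_at by auto
  show ?thesis
    by (rule exI[of _ d]) (use d in \<open>auto simp: dist_real_def\<close>)
qed

lemma quad_root:
  fixes \<phi> lam K \<epsilon> :: real
  assumes "\<phi> > 0" "lam \<ge> 0" "K \<ge> 0" "\<epsilon> > 0"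
  shows "\<exists>\<eta>>0. \<forall>h X. 0 < h \<and> h < \<eta> \<and> 0 \<le> X \<and> X\<^sup>2 \<le> \<phi>\<^sup>2 - 2*h*lam*\<phi> + h\<^sup>2*K \<longrightarrow>
           X \<le> \<phi> - lam*h + \<epsilon>*h/2"
proof -
  define \<eta> where "\<eta> = min (\<phi>/(lam+1)) (\<epsilon>*\<phi>/(K + \<epsilon>*lam + 1))"
  have p1: "0 < K + \<epsilon>*lam + 1" using assms by (smt (verit) mult_nonneg_nonneg)
  have eta: "\<eta> > 0" using assms p1 unfolding \<eta>_def by (auto intro!: divide_pos_pos)
  have main: "X \<le> \<phi> - lam*h + \<epsilon>*h/2" if h: "0 < h" "h < \<eta>" and X: "0 \<le> X" "X\<^sup>2 \<le> \<phi>\<^sup>2 - 2*h*lam*\<phi> + h\<^sup>2*K" for h X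
  proof -
    have h1: "h < \<phi>/(lam+1)" using h by (auto simp: \<eta>_def)
    have h2: "h < \<epsilon>*\<phi>/(K + \<epsilon>*lam + 1)" using h by (auto simp: \<eta>_def)
    have "h * (lam + 1) < \<phi>" using h1 assms(2) by (simp add: field_simps)
    then have lh: "lam * h < \<phi>" using h by (simp add: algebra_simps)
    have "h * (K + \<epsilon>*lam + 1) < \<epsilon>*\<phi>"
      using h2 assms by (simp add: field_simps add_pos_nonneg)
    then have q: "0 \<le> \<epsilon>*\<phi> - h*(\<epsilon>*lam + K)" using h by (simp add: algebra_simps)
    define B where "B = \<phi> - lam*h + \<epsilon>*h/2"
    have B0: "0 \<le> B" unfolding B_def using lh h assms by simp
    have id: "B\<^sup>2 - (\<phi>\<^sup>2 - 2*h*lam*\<phi> + h\<^sup>2*K) = h*(\<epsilon>*\<phi> - h*(\<epsilon>*lam + K)) + h\<^sup>2*(lam\<^sup>2 + \<epsilon>\<^sup>2/4)"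
      unfolding B_def by (simp add: power2_eq_square field_simps)
    have "0 \<le> h*(\<epsilon>*\<phi> - h*(\<epsilon>*lam + K))" using h q by simp
    moreover have "0 \<le> h\<^sup>2*(lam\<^sup>2 + \<epsilon>\<^sup>2/4)" by simp
    ultimately have "X\<^sup>2 \<le> B\<^sup>2" using id X by linarith
    then show ?thesis using B0 unfolding B_def by (rule power2_le_imp_le)
  qed
  show ?thesis using eta main by blast
qed
locale dom =
  fixes \<nu> :: "'a::metric_space measure" and \<Omega> :: "'a set"
  assumes Om: "\<Omega> \<in> sets \<nu>" and fin: "emeasure \<nu> \<Omega> < \<infinity>" and opn: "open \<Omega>"
begin

abbreviation "M \<equiv> restrict_space \<nu> \<Omega>"

lemma Om': "\<Omega> \<inter> space \<nu> \<in> sets \<nu>" using Om by simp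

lemma finM: "finite_measure M"
proof (rule finite_measureI)
  have "space M = \<Omega> \<inter> space \<nu>" by (simp add: space_restrict_space)
  then have "emeasure M (space M) = emeasure \<nu> (\<Omega> \<inter> space \<nu>)"
    by (simp add: emeasure_restrict_space[OF Om'])
  also have "\<Omega> \<inter> space \<nu> = \<Omega>" using sets.sets_into_space[OF Om] by blast
  finally show "emeasure M (space M) \<noteq> \<infinity>" using fin by simp
qed

sublocale FM: finite_measure M by (rule finM)

lemma nnM: "(\<integral>\<^sup>+x\<in>\<Omega>. g x \<partial>\<nu>) = (\<integral>\<^sup>+x. g x \<partial>M)"
  by (simp add: nn_integral_restrict_space[OF Om'])

lemma intM: "(\<integral>x\<in>\<Omega>. f x \<partial>\<nu>) = integral\<^sup>L M (f :: 'a \<Rightarrow> real)"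
  by (simp add: integral_restrict_space[OF Om'] set_lebesgue_integral_def)

lemma measM: "f \<in> borel_measurable \<nu> \<Longrightarrow> f \<in> borel_measurable M"
  by (rule measurable_restrict_space1)

lemma memL2_iff: "memL2 \<nu> \<Omega> f \<longleftrightarrow> f \<in> borel_measurable \<nu> \<and> integrable M (\<lambda>x. (f x)\<^sup>2)"
proof
  assume "memL2 \<nu> \<Omega> f"
  then have m: "f \<in> borel_measurable \<nu>" and fi: "(\<integral>\<^sup>+x. ennreal ((f x)\<^sup>2) \<partial>M) < \<infinity>"
    unfolding memL2_def nnM by auto
  have "integrable M (\<lambda>x. (f x)\<^sup>2)"
    by (rule integrableI_nonneg) (use measM[OF m] fi in auto)
  then show "f \<in> borel_measurable \<nu> \<and> integrable M (\<lambda>x. (f x)\<^sup>2)" using m by simp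
next
  assume a: "f \<in> borel_measurable \<nu> \<and> integrable M (\<lambda>x. (f x)\<^sup>2)"
  then have "(\<integral>\<^sup>+x. ennreal ((f x)\<^sup>2) \<partial>M) = ennreal (integral\<^sup>L M (\<lambda>x. (f x)\<^sup>2))"
    by (intro nn_integral_eq_integral) auto
  then show "memL2 \<nu> \<Omega> f" using a unfolding memL2_def nnM by simp
qed

lemma memL1_iff: "memL1 \<nu> \<Omega> f \<longleftrightarrow> f \<in> borel_measurable \<nu> \<and> integrable M f"
proof
  assume "memL1 \<nu> \<Omega> f"
  then have m: "f \<in> borel_measurable \<nu>" and fi: "(\<integral>\<^sup>+x. ennreal \<bar>f x\<bar> \<partial>M) < \<infinity>"
    unfolding memL1_def nnM by auto
  have "integrable M f"
    using measM[OF m] fi by (simp add: integrable_iff_bounded)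
  then show "f \<in> borel_measurable \<nu> \<and> integrable M f" using m by simp
next
  assume a: "f \<in> borel_measurable \<nu> \<and> integrable M f"
  then have "(\<integral>\<^sup>+x. ennreal (norm (f x)) \<partial>M) < \<infinity>" by (simp add: integrable_iff_bounded)
  then show "memL1 \<nu> \<Omega> f" using a unfolding memL1_def nnM by simp
qed

lemma l2norm_eq: "memL2 \<nu> \<Omega> f \<Longrightarrow> l2norm \<nu> \<Omega> f = sqrt (integral\<^sup>L M (\<lambda>x. (f x)\<^sup>2))"
proof -
  assume "memL2 \<nu> \<Omega> f"
  then have a: "f \<in> borel_measurable \<nu>" "integrable M (\<lambda>x. (f x)\<^sup>2)" by (auto simp: memL2_iff)
  then have "(\<integral>\<^sup>+x. ennreal ((f x)\<^sup>2) \<partial>M) = ennreal (integral\<^sup>L M (\<lambda>x. (f x)\<^sup>2))"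
    by (intro nn_integral_eq_integral) auto
  then show ?thesis unfolding l2norm_def nnM by simp
qed

lemma L2_lin:
  assumes "memL2 \<nu> \<Omega> f" "memL2 \<nu> \<Omega> g"
  shows "memL2 \<nu> \<Omega> (\<lambda>x. a * f x + b * g x)"
proof -
  have f: "f \<in> borel_measurable \<nu>" "integrable M (\<lambda>x. (f x)\<^sup>2)"
   and g: "g \<in> borel_measurable \<nu>" "integrable M (\<lambda>x. (g x)\<^sup>2)" using assms by (auto simp: memL2_iff)
  have "integrable M (\<lambda>x. (a * f x + b * g x)\<^sup>2)"
  proof (rule Bochner_Integration.integrable_bound[where f="\<lambda>x. 2 * a\<^sup>2 * (f x)\<^sup>2 + 2 * b\<^sup>2 * (g x)\<^sup>2"])
    show "integrable M (\<lambda>x. 2 * a\<^sup>2 * (f x)\<^sup>2 + 2 * b\<^sup>2 * (g x)\<^sup>2)"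
      using f(2) g(2) by auto
    show "(\<lambda>x. (a * f x + b * g x)\<^sup>2) \<in> borel_measurable M"
      using measM[OF f(1)] measM[OF g(1)] by measurable
    show "AE x in M. norm ((a * f x + b * g x)\<^sup>2) \<le> norm (2 * a\<^sup>2 * (f x)\<^sup>2 + 2 * b\<^sup>2 * (g x)\<^sup>2)"
    proof (rule AE_I2)
      fix x
      have "0 \<le> (a * f x - b * g x)\<^sup>2" by simp
      then have "(a * f x + b * g x)\<^sup>2 \<le> 2 * a\<^sup>2 * (f x)\<^sup>2 + 2 * b\<^sup>2 * (g x)\<^sup>2"
        by (simp add: power2_eq_square algebra_simps)
      then show "norm ((a * f x + b * g x)\<^sup>2) \<le> norm (2 * a\<^sup>2 * (f x)\<^sup>2 + 2 * b\<^sup>2 * (g x)\<^sup>2)"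
        by simp
    qed
  qed
  moreover have "(\<lambda>x. a * f x + b * g x) \<in> borel_measurable \<nu>" using f(1) g(1) by measurable
  ultimately show ?thesis by (simp add: memL2_iff)
qed

lemma L2_const: "memL2 \<nu> \<Omega> (\<lambda>x. c)"
  by (simp add: memL2_iff)

lemma L2_prod:
  assumes "memL2 \<nu> \<Omega> f" "memL2 \<nu> \<Omega> g"
  shows "integrable M (\<lambda>x. f x * g x)"
proof -
  have f: "f \<in> borel_measurable \<nu>" "integrable M (\<lambda>x. (f x)\<^sup>2)"
   and g: "g \<in> borel_measurable \<nu>" "integrable M (\<lambda>x. (g x)\<^sup>2)" using assms by (auto simp: memL2_iff)
  show ?thesis
  proof (rule Bochner_Integration.integrable_bound[where f="\<lambda>x. (f x)\<^sup>2 + (g x)\<^sup>2"])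
    show "integrable M (\<lambda>x. (f x)\<^sup>2 + (g x)\<^sup>2)" using f(2) g(2) by auto
    show "(\<lambda>x. f x * g x) \<in> borel_measurable M"
      using measM[OF f(1)] measM[OF g(1)] by measurable
    show "AE x in M. norm (f x * g x) \<le> norm ((f x)\<^sup>2 + (g x)\<^sup>2)"
    proof (rule AE_I2)
      fix x
      have "0 \<le> (\<bar>f x\<bar> - \<bar>g x\<bar>)\<^sup>2" by simp
      then have "2 * (\<bar>f x\<bar> * \<bar>g x\<bar>) \<le> (f x)\<^sup>2 + (g x)\<^sup>2"
        by (simp add: power2_eq_square algebra_simps)
      moreover have "0 \<le> \<bar>f x\<bar> * \<bar>g x\<bar>" by simp
      ultimately have "\<bar>f x * g x\<bar> \<le> (f x)\<^sup>2 + (g x)\<^sup>2"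
        unfolding abs_mult by linarith
      then show "norm (f x * g x) \<le> norm ((f x)\<^sup>2 + (g x)\<^sup>2)" by simp
    qed
  qed
qed

lemma L2_int: "memL2 \<nu> \<Omega> f \<Longrightarrow> integrable M f"
  using L2_prod[of f "\<lambda>x. 1"] L2_const by simp

lemma L2_sq_int: "memL2 \<nu> \<Omega> f \<Longrightarrow> integrable M (\<lambda>x. (f x)\<^sup>2)"
  by (simp add: memL2_iff)

lemma Q_expand:
  assumes "memL2 \<nu> \<Omega> f" "memL2 \<nu> \<Omega> g"
  shows "integral\<^sup>L M (\<lambda>x. (f x + s * g x)\<^sup>2) =
    integral\<^sup>L M (\<lambda>x. (f x)\<^sup>2) + 2 * s * integral\<^sup>L M (\<lambda>x. f x * g x) + s\<^sup>2 * integral\<^sup>L M (\<lambda>x. (g x)\<^sup>2)"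
proof -
  have i1: "integrable M (\<lambda>x. (f x)\<^sup>2)" "integrable M (\<lambda>x. (g x)\<^sup>2)" "integrable M (\<lambda>x. f x * g x)"
    using assms by (auto simp: memL2_iff L2_prod)
  have "(\<lambda>x. (f x + s * g x)\<^sup>2) = (\<lambda>x. (f x)\<^sup>2 + (2 * s) * (f x * g x) + s\<^sup>2 * (g x)\<^sup>2)"
    by (auto simp: power2_eq_square algebra_simps)
  then show ?thesis using i1 by simp
qed

lemma quad_disc:
  fixes A B C :: real
  assumes "\<And>s. 0 \<le> A + 2 * s * B + s\<^sup>2 * C" "0 \<le> C"
  shows "B\<^sup>2 \<le> A * C"
proof (cases "C = 0")
  case True
  have "B = 0"
  proof (rule ccontr)
    assume "B \<noteq> 0"
    have "0 \<le> A + 2 * (-(A+1)/(2*B)) * B + (-(A+1)/(2*B))\<^sup>2 * C" by (rule assms(1))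
    then show False using True \<open>B \<noteq> 0\<close> by (simp add: field_simps)
  qed
  then show ?thesis using True by simp
next
  case False
  then have C: "C > 0" using assms(2) by simp
  have "0 \<le> A + 2 * (-B/C) * B + (-B/C)\<^sup>2 * C" by (rule assms(1))
  also have "\<dots> = A - B\<^sup>2 / C" using C by (simp add: field_simps power2_eq_square)
  finally show ?thesis using C by (simp add: field_simps)
qed

lemma CS:
  assumes "memL2 \<nu> \<Omega> f" "memL2 \<nu> \<Omega> g"
  shows "\<bar>integral\<^sup>L M (\<lambda>x. f x * g x)\<bar> \<le> l2norm \<nu> \<Omega> f * l2norm \<nu> \<Omega> g"
proof -
  let ?A = "integral\<^sup>L M (\<lambda>x. (f x)\<^sup>2)" and ?B = "integral\<^sup>L M (\<lambda>x. f x * g x)"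
    and ?C = "integral\<^sup>L M (\<lambda>x. (g x)\<^sup>2)"
  have "?B\<^sup>2 \<le> ?A * ?C"
  proof (rule quad_disc)
    fix s
    have "0 \<le> integral\<^sup>L M (\<lambda>x. (f x + s * g x)\<^sup>2)" by simp
    then show "0 \<le> ?A + 2 * s * ?B + s\<^sup>2 * ?C" using Q_expand[OF assms] by simp
  qed simp
  then have "sqrt (?B\<^sup>2) \<le> sqrt (?A * ?C)" by (rule real_sqrt_le_mono)
  then show ?thesis using assms by (simp add: l2norm_eq real_sqrt_mult)
qed

lemma l2norm_nonneg: "0 \<le> l2norm \<nu> \<Omega> f" by (simp add: l2norm_def)

lemma l2norm_sq: "memL2 \<nu> \<Omega> f \<Longrightarrow> (l2norm \<nu> \<Omega> f)\<^sup>2 = integral\<^sup>L M (\<lambda>x. (f x)\<^sup>2)"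
  by (simp add: l2norm_eq)

lemma l2norm_expand:
  assumes "memL2 \<nu> \<Omega> f" "memL2 \<nu> \<Omega> g"
  shows "(l2norm \<nu> \<Omega> (\<lambda>x. f x + s * g x))\<^sup>2 =
    (l2norm \<nu> \<Omega> f)\<^sup>2 + 2 * s * integral\<^sup>L M (\<lambda>x. f x * g x) + s\<^sup>2 * (l2norm \<nu> \<Omega> g)\<^sup>2"
proof -
  have "memL2 \<nu> \<Omega> (\<lambda>x. 1 * f x + s * g x)" by (rule L2_lin[OF assms])
  then show ?thesis using Q_expand[OF assms, of s] assms by (simp add: l2norm_sq)
qed

lemma l2norm_tri:
  assumes "memL2 \<nu> \<Omega> f" "memL2 \<nu> \<Omega> g"
  shows "l2norm \<nu> \<Omega> (\<lambda>x. f x + g x) \<le> l2norm \<nu> \<Omega> f + l2norm \<nu> \<Omega> g"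
proof -
  have "(l2norm \<nu> \<Omega> (\<lambda>x. f x + 1 * g x))\<^sup>2 =
    (l2norm \<nu> \<Omega> f)\<^sup>2 + 2 * 1 * integral\<^sup>L M (\<lambda>x. f x * g x) + 1\<^sup>2 * (l2norm \<nu> \<Omega> g)\<^sup>2"
    by (rule l2norm_expand[OF assms])
  also have "\<dots> \<le> (l2norm \<nu> \<Omega> f + l2norm \<nu> \<Omega> g)\<^sup>2"
  proof -
    have "integral\<^sup>L M (\<lambda>x. f x * g x) \<le> l2norm \<nu> \<Omega> f * l2norm \<nu> \<Omega> g"
      using CS[OF assms] by (rule abs_le_D1)
    moreover have "(l2norm \<nu> \<Omega> f + l2norm \<nu> \<Omega> g)\<^sup>2 =
      (l2norm \<nu> \<Omega> f)\<^sup>2 + 2 * (l2norm \<nu> \<Omega> f * l2norm \<nu> \<Omega> g) + (l2norm \<nu> \<Omega> g)\<^sup>2"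
      by (simp add: power2_sum)
    ultimately show ?thesis by simp
  qed
  finally have "(l2norm \<nu> \<Omega> (\<lambda>x. f x + g x))\<^sup>2 \<le> (l2norm \<nu> \<Omega> f + l2norm \<nu> \<Omega> g)\<^sup>2" by simp
  moreover have "0 \<le> l2norm \<nu> \<Omega> f + l2norm \<nu> \<Omega> g" using l2norm_nonneg add_nonneg_nonneg by blast
  ultimately show ?thesis by (rule power2_le_imp_le)
qed

lemma l2norm_scale:
  assumes "memL2 \<nu> \<Omega> f"
  shows "l2norm \<nu> \<Omega> (\<lambda>x. c * f x) = \<bar>c\<bar> * l2norm \<nu> \<Omega> f"
proof -
  have m: "memL2 \<nu> \<Omega> (\<lambda>x. c * f x + 0 * f x)" by (rule L2_lin[OF assms assms])
  have "(\<lambda>x. (c * f x)\<^sup>2) = (\<lambda>x. c\<^sup>2 * (f x)\<^sup>2)" by (simp add: power_mult_distrib)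
  then have "integral\<^sup>L M (\<lambda>x. (c * f x)\<^sup>2) = c\<^sup>2 * integral\<^sup>L M (\<lambda>x. (f x)\<^sup>2)" by simp
  then show ?thesis using m assms by (simp add: l2norm_eq real_sqrt_mult)
qed

lemma int_bound:
  assumes "memL2 \<nu> \<Omega> f"
  shows "\<bar>integral\<^sup>L M f\<bar> \<le> l2norm \<nu> \<Omega> (\<lambda>x. 1) * l2norm \<nu> \<Omega> f"
  using CS[OF L2_const assms, of 1] by simp

lemma l2norm_zero:
  assumes "memL2 \<nu> \<Omega> f" "l2norm \<nu> \<Omega> f = 0"
  shows "AE x in \<nu>. x \<in> \<Omega> \<longrightarrow> f x = 0"
proof -
  have "integral\<^sup>L M (\<lambda>x. (f x)\<^sup>2) = 0" using assms l2norm_sq by fastforce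
  then have "AE x in M. (f x)\<^sup>2 = 0"
    using assms(1) by (subst (asm) integral_nonneg_eq_0_iff_AE) (auto simp: memL2_iff)
  then have "AE x in \<nu>. x \<in> \<Omega> \<longrightarrow> (f x)\<^sup>2 = 0"
    by (simp add: AE_restrict_space_iff[OF Om'])
  then show ?thesis by simp
qed

lemma l2norm_cong:
  assumes "AE x in \<nu>. x \<in> \<Omega> \<longrightarrow> f x = g x"
  shows "l2norm \<nu> \<Omega> f = l2norm \<nu> \<Omega> g"
proof -
  have "(\<integral>\<^sup>+x\<in>\<Omega>. ennreal ((f x)\<^sup>2) \<partial>\<nu>) = (\<integral>\<^sup>+x\<in>\<Omega>. ennreal ((g x)\<^sup>2) \<partial>\<nu>)"
  proof (rule nn_integral_cong_AE)
    show "AE x in \<nu>. ennreal ((f x)\<^sup>2) * indicator \<Omega> x = ennreal ((g x)\<^sup>2) * indicator \<Omega> x"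
      using assms by (rule eventually_mono) (simp split: split_indicator)
  qed
  then show ?thesis unfolding l2norm_def by simp
qed


lemma meas_shift: fixes u :: "'a \<Rightarrow> real" shows "(\<lambda>x. u x + k) \<in> borel_measurable \<nu> \<longleftrightarrow> u \<in> borel_measurable \<nu>"
proof
  assume "(\<lambda>x. u x + k) \<in> borel_measurable \<nu>"
  then have "(\<lambda>x. (u x + k) + (- k)) \<in> borel_measurable \<nu>" by measurable
  then show "u \<in> borel_measurable \<nu>" by simp
next
  assume "u \<in> borel_measurable \<nu>"
  then show "(\<lambda>x. u x + k) \<in> borel_measurable \<nu>" by (rule borel_measurable_add) auto
qed

lemma memL1_shift: fixes u :: "'a \<Rightarrow> real" shows "memL1 \<nu> \<Omega> (\<lambda>x. u x + k) \<longleftrightarrow> memL1 \<nu> \<Omega> u"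
proof -
  have "integrable M (\<lambda>x. u x + k) \<longleftrightarrow> integrable M u"
  proof
    assume "integrable M (\<lambda>x. u x + k)"
    then have "integrable M (\<lambda>x. (u x + k) - k)" by (intro Bochner_Integration.integrable_diff) auto
    then show "integrable M u" by simp
  qed (intro Bochner_Integration.integrable_add, auto)
  then show ?thesis unfolding memL1_iff meas_shift by simp
qed

lemma memL2_shift1: "memL2 \<nu> \<Omega> u \<Longrightarrow> memL2 \<nu> \<Omega> (\<lambda>x. u x + k)"
  using L2_lin[OF _ L2_const, of u 1 k 1] by simp

lemma memL2_shift: "memL2 \<nu> \<Omega> (\<lambda>x. u x + k) \<longleftrightarrow> memL2 \<nu> \<Omega> u"
proof
  assume "memL2 \<nu> \<Omega> (\<lambda>x. u x + k)"
  from memL2_shift1[OF this, of "-k"] show "memL2 \<nu> \<Omega> u" by simp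
qed (rule memL2_shift1)

lemma memBV_shift: "memBV \<nu> \<Omega> (\<lambda>x. u x + k) \<longleftrightarrow> memBV \<nu> \<Omega> u"
  unfolding memBV_def memL1_shift tv_shift by simp

lemma TVN_shift: "TVN \<nu> \<Omega> (\<lambda>x. u x + k) = TVN \<nu> \<Omega> u"
  unfolding TVN_def memBV_shift memL2_shift tv_shift by simp

lemma TVN_const: "TVN \<nu> \<Omega> (\<lambda>x. c) = 0"
proof -
  have "memL1 \<nu> \<Omega> (\<lambda>x. c)" by (simp add: memL1_iff)
  moreover have "total_variation \<nu> \<Omega> (\<lambda>x. c) = 0" by (rule tv_const[OF opn])
  ultimately show ?thesis using L2_const by (simp add: TVN_def memBV_def)
qed

lemma L2_neg: "memL2 \<nu> \<Omega> (\<lambda>x. - v x) \<Longrightarrow> memL2 \<nu> \<Omega> v"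
  using L2_lin[of "\<lambda>x. - v x" "\<lambda>x. - v x" "-1" 0] by simp

lemma sd_basic:
  assumes "(\<lambda>x. - v x) \<in> subdiff_TVN \<nu> \<Omega> U"
  shows "memL2 \<nu> \<Omega> U" "memL2 \<nu> \<Omega> v" "TVN \<nu> \<Omega> U \<noteq> \<infinity>"
    "\<And>w. memL2 \<nu> \<Omega> w \<Longrightarrow> enn2ereal (TVN \<nu> \<Omega> w) \<ge>
       enn2ereal (TVN \<nu> \<Omega> U) + ereal (integral\<^sup>L M (\<lambda>x. - v x * (w x - U x)))"
  using assms L2_neg by (auto simp: subdiff_TVN_def intM)

lemma sd_mean:
  assumes "(\<lambda>x. - v x) \<in> subdiff_TVN \<nu> \<Omega> U"
  shows "integral\<^sup>L M v = 0"
proof -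
  note sd = sd_basic[OF assms]
  obtain r where r: "TVN \<nu> \<Omega> U = ennreal r" "0 \<le> r" using sd(3) by (cases "TVN \<nu> \<Omega> U") auto
  have key: "0 \<le> k * integral\<^sup>L M v" for k
  proof -
    have "enn2ereal (TVN \<nu> \<Omega> (\<lambda>x. U x + k)) \<ge>
       enn2ereal (TVN \<nu> \<Omega> U) + ereal (integral\<^sup>L M (\<lambda>x. - v x * ((U x + k) - U x)))"
      by (rule sd(4)) (rule memL2_shift1[OF sd(1)])
    moreover have "integral\<^sup>L M (\<lambda>x. - v x * ((U x + k) - U x)) = - k * integral\<^sup>L M v"
      by simp
    ultimately show ?thesis using r by (simp add: TVN_shift mult.commute)
  qed
  show ?thesis using key[of 1] key[of "-1"] by simp
qed

lemma sd_const:
  assumes "(\<lambda>x. - v x) \<in> subdiff_TVN \<nu> \<Omega> U"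
  shows "integral\<^sup>L M (\<lambda>x. v x * (U x - c)) \<le> - enn2real (TVN \<nu> \<Omega> U)"
proof -
  note sd = sd_basic[OF assms]
  obtain r where r: "TVN \<nu> \<Omega> U = ennreal r" "0 \<le> r" using sd(3) by (cases "TVN \<nu> \<Omega> U") auto
  have ineq: "enn2ereal (TVN \<nu> \<Omega> (\<lambda>x. c)) \<ge>
       enn2ereal (TVN \<nu> \<Omega> U) + ereal (integral\<^sup>L M (\<lambda>x. - v x * (c - U x)))"
    by (rule sd(4)) (rule L2_const)
  have eq: "integral\<^sup>L M (\<lambda>x. - v x * (c - U x)) = integral\<^sup>L M (\<lambda>x. v x * (U x - c))"
    by (rule arg_cong[where f="integral\<^sup>L M"]) (auto simp: algebra_simps)
  have "ereal 0 \<ge> ereal r + ereal (integral\<^sup>L M (\<lambda>x. v x * (U x - c)))"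
    using ineq unfolding eq TVN_const r using r(2) by (simp add: zero_ennreal.rep_eq)
  then show ?thesis using r by simp
qed

lemma lam_bound:
  assumes L: "ennreal L \<le> lambda1_TVN \<nu> \<Omega>" and "0 \<le> L" and w: "memL2 \<nu> \<Omega> w" "integral\<^sup>L M w = 0"
  shows "ennreal (L * l2norm \<nu> \<Omega> w) \<le> TVN \<nu> \<Omega> w"
proof (cases "l2norm \<nu> \<Omega> w = 0")
  case True then show ?thesis by simp
next
  case False
  then have n: "l2norm \<nu> \<Omega> w > 0" using l2norm_nonneg[of w] by simp
  have "lambda1_TVN \<nu> \<Omega> \<le> TVN \<nu> \<Omega> w / ennreal (l2norm \<nu> \<Omega> w)"
    unfolding lambda1_TVN_def by (rule INF_lower) (use w False in \<open>simp add: intM\<close>)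
  then have le: "ennreal L \<le> TVN \<nu> \<Omega> w / ennreal (l2norm \<nu> \<Omega> w)" using L by simp
  show ?thesis
  proof (rule ccontr)
    assume "\<not> ?thesis"
    then have "TVN \<nu> \<Omega> w < ennreal L * ennreal (l2norm \<nu> \<Omega> w)"
      using \<open>0 \<le> L\<close> l2norm_nonneg[of w] by (simp add: ennreal_mult not_le)
    then have "TVN \<nu> \<Omega> w / ennreal (l2norm \<nu> \<Omega> w) < ennreal L"
      using n by (subst divide_less_ennreal) auto
    then show False using le by simp
  qed
qed


lemma acr_L2:
  assumes ac: "abs_cont_L2 \<nu> \<Omega> u T" and K: "0 \<le> K" "0 \<le> L"
    and bnd: "\<And>s t. s \<in> {0..T} \<Longrightarrow> t \<in> {0..T} \<Longrightarrow>
       \<bar>F s - F t\<bar> \<le> K * l2norm \<nu> \<Omega> (\<lambda>x. u s x - u t x) + L * \<bar>s - t\<bar>"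
    and ab: "0 \<le> a" "b \<le> T"
  shows "acr F a b"
  unfolding acr_def
proof (intro allI impI)
  fix \<epsilon> :: real assume e: "\<epsilon> > 0"
  then have "\<epsilon>/(2*(K+1)) > 0" using K by simp
  then obtain \<delta>1 where d1: "\<delta>1 > 0" and H: "\<forall>(n::nat) a b.
        (\<forall>i<n. 0 \<le> a i \<and> a i \<le> b i \<and> b i \<le> T) \<and>
        (\<forall>i<n. \<forall>j<n. i \<noteq> j \<longrightarrow> b i \<le> a j \<or> b j \<le> a i) \<and>
        (\<Sum>i<n. b i - a i) < \<delta>1 \<longrightarrow>
        (\<Sum>i<n. l2norm \<nu> \<Omega> (\<lambda>x. u (b i) x - u (a i) x)) < \<epsilon>/(2*(K+1))"
    using ac unfolding abs_cont_L2_def by blast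
  define \<delta> where "\<delta> = min \<delta>1 (\<epsilon>/(2*(L+1)))"
  have d: "\<delta> > 0" using d1 e K by (simp add: \<delta>_def)
  show "\<exists>\<delta>>0. \<forall>(n::nat) p q. (\<forall>i<n. a \<le> p i \<and> p i \<le> q i \<and> q i \<le> b) \<and>
      (\<forall>i<n. \<forall>j<n. i \<noteq> j \<longrightarrow> q i \<le> p j \<or> q j \<le> p i) \<and> (\<Sum>i<n. q i - p i) < \<delta> \<longrightarrow>
      (\<Sum>i<n. \<bar>F (q i) - F (p i)\<bar>) < \<epsilon>"
  proof (intro exI[of _ \<delta>] conjI allI impI d)
    fix n :: nat and p q
    assume A: "(\<forall>i<n. a \<le> p i \<and> p i \<le> q i \<and> q i \<le> b) \<and>
      (\<forall>i<n. \<forall>j<n. i \<noteq> j \<longrightarrow> q i \<le> p j \<or> q j \<le> p i) \<and> (\<Sum>i<n. q i - p i) < \<delta>"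
    have inT: "\<forall>i<n. 0 \<le> p i \<and> p i \<le> q i \<and> q i \<le> T" using A ab by force
    have l1: "(\<Sum>i<n. q i - p i) < \<delta>1" using A by (simp add: \<delta>_def)
    have l2: "(\<Sum>i<n. q i - p i) < \<epsilon>/(2*(L+1))" using A by (simp add: \<delta>_def)
    have S1: "(\<Sum>i<n. l2norm \<nu> \<Omega> (\<lambda>x. u (q i) x - u (p i) x)) < \<epsilon>/(2*(K+1))"
      using H inT A l1 by blast
    have "(\<Sum>i<n. \<bar>F (q i) - F (p i)\<bar>) \<le>
        (\<Sum>i<n. K * l2norm \<nu> \<Omega> (\<lambda>x. u (q i) x - u (p i) x) + L * (q i - p i))"
    proof (rule sum_mono)
      fix i assume "i \<in> {..<n}"
      then have "0 \<le> p i" "p i \<le> q i" "q i \<le> T" using inT by auto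
      then show "\<bar>F (q i) - F (p i)\<bar> \<le> K * l2norm \<nu> \<Omega> (\<lambda>x. u (q i) x - u (p i) x) + L * (q i - p i)"
        using bnd[of "q i" "p i"] by simp
    qed
    also have "\<dots> = K * (\<Sum>i<n. l2norm \<nu> \<Omega> (\<lambda>x. u (q i) x - u (p i) x)) + L * (\<Sum>i<n. q i - p i)"
      by (simp add: sum.distrib sum_distrib_left)
    also have "\<dots> \<le> K * (\<epsilon>/(2*(K+1))) + L * (\<epsilon>/(2*(L+1)))"
      using S1 l2 K by (intro add_mono mult_left_mono) auto
    also have "\<dots> < \<epsilon>/2 + \<epsilon>/2"
    proof -
      have "K * (\<epsilon>/(2*(K+1))) < \<epsilon>/2" using K e by (simp add: field_simps)
      moreover have "L * (\<epsilon>/(2*(L+1))) < \<epsilon>/2" using K e by (simp add: field_simps)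
      ultimately show ?thesis by linarith
    qed
    finally show "(\<Sum>i<n. \<bar>F (q i) - F (p i)\<bar>) < \<epsilon>" by simp
  qed
qed

lemma dini_mean:
  assumes us: "memL2 \<nu> \<Omega> (u s)" and v: "memL2 \<nu> \<Omega> v"
    and uh: "\<And>h. h > 0 \<Longrightarrow> memL2 \<nu> \<Omega> (u (s + h))"
    and tend: "((\<lambda>h. l2norm \<nu> \<Omega> (\<lambda>x. (u (s + h) x - u s x) / h - v x)) \<longlongrightarrow> 0) (at 0)"
    and v0: "integral\<^sup>L M v = 0" and e: "\<epsilon> > 0"
  shows "\<exists>\<eta>>0. \<forall>h. 0 < h \<and> h < \<eta> \<longrightarrow> \<bar>integral\<^sup>L M (u (s + h)) - integral\<^sup>L M (u s)\<bar> \<le> \<epsilon> * h"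
proof -
  define N1 where "N1 = l2norm \<nu> \<Omega> (\<lambda>x. 1)"
  have N1: "0 \<le> N1" by (simp add: N1_def l2norm_nonneg)
  obtain \<eta> where eta: "\<eta> > 0" and H: "\<And>h. 0 < h \<Longrightarrow> h < \<eta> \<Longrightarrow>
      \<bar>l2norm \<nu> \<Omega> (\<lambda>x. (u (s + h) x - u s x) / h - v x)\<bar> < \<epsilon>/(N1+1)"
    using tend_extract[OF tend, of "\<epsilon>/(N1+1)"] e N1 by auto
  show ?thesis
  proof (intro exI[of _ \<eta>] conjI allI impI eta)
    fix h :: real assume h: "0 < h \<and> h < \<eta>"
    define d where "d = (\<lambda>x. (u (s + h) x - u s x) / h - v x)"
    have dL2: "memL2 \<nu> \<Omega> d"
    proof -
      have "memL2 \<nu> \<Omega> (\<lambda>x. (1/h) * u (s + h) x + (-1/h) * u s x)" by (rule L2_lin) (use uh h us in auto)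
      then have "memL2 \<nu> \<Omega> (\<lambda>x. 1 * ((1/h) * u (s + h) x + (-1/h) * u s x) + (-1) * v x)" using v by (rule L2_lin)
      moreover have "(\<lambda>x. 1 * ((1/h) * u (s + h) x + (-1/h) * u s x) + (-1) * v x) = d"
        using h by (auto simp: d_def field_simps)
      ultimately show ?thesis by simp
    qed
    have eq: "u (s + h) = (\<lambda>x. u s x + h * v x + h * d x)"
      using h by (auto simp: d_def field_simps)
    have "integral\<^sup>L M (u (s + h)) = integral\<^sup>L M (u s) + h * integral\<^sup>L M v + h * integral\<^sup>L M d"
      by (subst eq) (use L2_int[OF us] L2_int[OF v] L2_int[OF dL2] in simp)
    then have "\<bar>integral\<^sup>L M (u (s + h)) - integral\<^sup>L M (u s)\<bar> = h * \<bar>integral\<^sup>L M d\<bar>"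
      using v0 h by (simp add: abs_mult)
    also have "\<dots> \<le> h * (N1 * l2norm \<nu> \<Omega> d)"
      using int_bound[OF dL2] h unfolding N1_def by (intro mult_left_mono) auto
    also have "\<dots> \<le> h * (N1 * (\<epsilon>/(N1+1)))"
      using H[of h] h N1 l2norm_nonneg[of d] unfolding d_def
      by (intro mult_left_mono) (auto intro: mult_left_mono)
    also have "\<dots> \<le> h * \<epsilon>"
    proof -
      have "N1 * (\<epsilon>/(N1+1)) \<le> \<epsilon>" using N1 e by (simp add: field_simps)
      then show ?thesis by (rule mult_left_mono) (use h in auto)
    qed
    also have "h * \<epsilon> = \<epsilon> * h" by (rule mult.commute)
    finally show "\<bar>integral\<^sup>L M (u (s + h)) - integral\<^sup>L M (u s)\<bar> \<le> \<epsilon> * h" .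
  qed
qed

lemma dini_psi:
  assumes us: "memL2 \<nu> \<Omega> (u s)" and v: "memL2 \<nu> \<Omega> v"
    and uh: "\<And>h. h > 0 \<Longrightarrow> memL2 \<nu> \<Omega> (u (s + h))"
    and tend: "((\<lambda>h. l2norm \<nu> \<Omega> (\<lambda>x. (u (s + h) x - u s x) / h - v x)) \<longlongrightarrow> 0) (at 0)"
    and pos: "l2norm \<nu> \<Omega> (\<lambda>x. u s x - c) > 0" and lam: "lam \<ge> 0"
    and I: "integral\<^sup>L M (\<lambda>x. (u s x - c) * v x) \<le> - lam * l2norm \<nu> \<Omega> (\<lambda>x. u s x - c)"
    and e: "\<epsilon> > 0"
  shows "\<exists>\<eta>>0. \<forall>h. 0 < h \<and> h < \<eta> \<longrightarrow>
     (l2norm \<nu> \<Omega> (\<lambda>x. u (s + h) x - c) + lam * (s + h)) - (l2norm \<nu> \<Omega> (\<lambda>x. u s x - c) + lam * s) \<le> \<epsilon> * h"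
proof -
  define W where "W = (\<lambda>x. u s x - c)"
  define \<phi> where "\<phi> = l2norm \<nu> \<Omega> W"
  define K where "K = (l2norm \<nu> \<Omega> v)\<^sup>2"
  have WL2: "memL2 \<nu> \<Omega> W" using L2_lin[OF us L2_const, of 1 "-c" 1] by (simp add: W_def)
  obtain \<eta>1 where eta1: "\<eta>1 > 0" and Q: "\<And>h X. 0 < h \<Longrightarrow> h < \<eta>1 \<Longrightarrow> 0 \<le> X \<Longrightarrow>
      X\<^sup>2 \<le> \<phi>\<^sup>2 - 2*h*lam*\<phi> + h\<^sup>2*K \<Longrightarrow> X \<le> \<phi> - lam*h + \<epsilon>*h/2"
    using quad_root[of \<phi> lam K \<epsilon>] pos lam e unfolding \<phi>_def W_def K_def by auto
  obtain \<eta>2 where eta2: "\<eta>2 > 0" and H: "\<And>h. 0 < h \<Longrightarrow> h < \<eta>2 \<Longrightarrow>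
      \<bar>l2norm \<nu> \<Omega> (\<lambda>x. (u (s + h) x - u s x) / h - v x)\<bar> < \<epsilon>/2"
    using tend_extract[OF tend, of "\<epsilon>/2"] e by auto
  show ?thesis
  proof (intro exI[of _ "min \<eta>1 \<eta>2"] conjI allI impI)
    show "min \<eta>1 \<eta>2 > 0" using eta1 eta2 by simp
    fix h :: real assume h: "0 < h \<and> h < min \<eta>1 \<eta>2"
    define d where "d = (\<lambda>x. (u (s + h) x - u s x) / h - v x)"
    have dL2: "memL2 \<nu> \<Omega> d"
    proof -
      have "memL2 \<nu> \<Omega> (\<lambda>x. (1/h) * u (s + h) x + (-1/h) * u s x)" by (rule L2_lin) (use uh h us in auto)
      then have "memL2 \<nu> \<Omega> (\<lambda>x. 1 * ((1/h) * u (s + h) x + (-1/h) * u s x) + (-1) * v x)" using v by (rule L2_lin)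
      moreover have "(\<lambda>x. 1 * ((1/h) * u (s + h) x + (-1/h) * u s x) + (-1) * v x) = d"
        using h by (auto simp: d_def field_simps)
      ultimately show ?thesis by simp
    qed
    have Wv: "memL2 \<nu> \<Omega> (\<lambda>x. W x + h * v x)" using L2_lin[OF WL2 v, of 1 h] by simp
    have hd: "memL2 \<nu> \<Omega> (\<lambda>x. h * d x)" using L2_lin[OF dL2 dL2, of h 0] by simp
    have eq: "(\<lambda>x. u (s + h) x - c) = (\<lambda>x. (W x + h * v x) + h * d x)"
      using h by (auto simp: d_def W_def field_simps)
    have "l2norm \<nu> \<Omega> (\<lambda>x. u (s + h) x - c) \<le> l2norm \<nu> \<Omega> (\<lambda>x. W x + h * v x) + l2norm \<nu> \<Omega> (\<lambda>x. h * d x)"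
      unfolding eq by (rule l2norm_tri[OF Wv hd])
    also have "l2norm \<nu> \<Omega> (\<lambda>x. h * d x) = h * l2norm \<nu> \<Omega> d"
      using l2norm_scale[OF dL2, of h] h by simp
    also have "h * l2norm \<nu> \<Omega> d \<le> h * (\<epsilon>/2)"
      using H[of h] h l2norm_nonneg[of d] unfolding d_def by (intro mult_left_mono) auto
    also have "l2norm \<nu> \<Omega> (\<lambda>x. W x + h * v x) \<le> \<phi> - lam*h + \<epsilon>*h/2"
    proof (rule Q)
      show "0 < h" "h < \<eta>1" using h by auto
      show "0 \<le> l2norm \<nu> \<Omega> (\<lambda>x. W x + h * v x)" by (rule l2norm_nonneg)
      have "(l2norm \<nu> \<Omega> (\<lambda>x. W x + h * v x))\<^sup>2 = \<phi>\<^sup>2 + 2 * h * integral\<^sup>L M (\<lambda>x. W x * v x) + h\<^sup>2 * K"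
        unfolding \<phi>_def K_def by (rule l2norm_expand[OF WL2 v])
      also have "2 * h * integral\<^sup>L M (\<lambda>x. W x * v x) \<le> 2 * h * (- lam * \<phi>)"
        using I h unfolding W_def \<phi>_def by (intro mult_left_mono) auto
      finally show "(l2norm \<nu> \<Omega> (\<lambda>x. W x + h * v x))\<^sup>2 \<le> \<phi>\<^sup>2 - 2*h*lam*\<phi> + h\<^sup>2*K"
        by (simp add: algebra_simps)
    qed
    finally have "l2norm \<nu> \<Omega> (\<lambda>x. u (s + h) x - c) \<le> \<phi> - lam*h + \<epsilon>*h/2 + h * (\<epsilon>/2)" by simp
    then show "(l2norm \<nu> \<Omega> (\<lambda>x. u (s + h) x - c) + lam * (s + h)) - (l2norm \<nu> \<Omega> (\<lambda>x. u s x - c) + lam * s) \<le> \<epsilon> * h"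
      unfolding \<phi>_def W_def by (simp add: algebra_simps)
  qed
qed


lemma int1: "integral\<^sup>L M (\<lambda>x. 1::real) = measure \<nu> \<Omega>"
proof -
  have "space M = \<Omega> \<inter> space \<nu>" by (simp add: space_restrict_space)
  also have "\<dots> = \<Omega>" using sets.sets_into_space[OF Om] by blast
  finally have "measure M (space M) = measure \<nu> \<Omega>"
    by (simp add: measure_restrict_space[OF Om'])
  then show ?thesis by simp
qed

lemma L2_diff: "memL2 \<nu> \<Omega> f \<Longrightarrow> memL2 \<nu> \<Omega> g \<Longrightarrow> memL2 \<nu> \<Omega> (\<lambda>x. f x - g x)"
  using L2_lin[of f g 1 "-1"] by simp

lemma l2norm_swap: "memL2 \<nu> \<Omega> f \<Longrightarrow> memL2 \<nu> \<Omega> g \<Longrightarrow>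
   l2norm \<nu> \<Omega> (\<lambda>x. g x - f x) = l2norm \<nu> \<Omega> (\<lambda>x. f x - g x)"
  using l2norm_scale[OF L2_diff, of f g "-1"] by simp

lemma lambda_pos:
  assumes P: "\<exists>C>0. \<forall>w. memBV \<nu> \<Omega> w \<and> memL2 \<nu> \<Omega> w \<longrightarrow>
           ennreal (l2norm \<nu> \<Omega> (\<lambda>x. w x - mean \<nu> \<Omega> w)) \<le> ennreal C * total_variation \<nu> \<Omega> w"
  shows "lambda1_TVN \<nu> \<Omega> > 0"
proof -
  obtain C where C: "C > 0" and PC: "\<And>w. memBV \<nu> \<Omega> w \<Longrightarrow> memL2 \<nu> \<Omega> w \<Longrightarrow>
           ennreal (l2norm \<nu> \<Omega> (\<lambda>x. w x - mean \<nu> \<Omega> w)) \<le> ennreal C * total_variation \<nu> \<Omega> w"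
    using P by blast
  have "ennreal (1/C) \<le> lambda1_TVN \<nu> \<Omega>"
    unfolding lambda1_TVN_def
  proof (rule INF_greatest)
    fix w assume "w \<in> {w. memL2 \<nu> \<Omega> w \<and> l2norm \<nu> \<Omega> w \<noteq> 0 \<and> (\<integral>x\<in>\<Omega>. w x \<partial>\<nu>) = 0}"
    then have w: "memL2 \<nu> \<Omega> w" "l2norm \<nu> \<Omega> w \<noteq> 0" "(\<integral>x\<in>\<Omega>. w x \<partial>\<nu>) = 0" by auto
    define n where "n = l2norm \<nu> \<Omega> w"
    have n: "n > 0" using w(2) l2norm_nonneg[of w] by (simp add: n_def)
    show "ennreal (1/C) \<le> TVN \<nu> \<Omega> w / ennreal (l2norm \<nu> \<Omega> w)"
    proof (cases "TVN \<nu> \<Omega> w = \<infinity>")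
      case True
      then show ?thesis by (simp add: ennreal_top_divide)
    next
      case False
      then have bv: "memBV \<nu> \<Omega> w" and tv: "TVN \<nu> \<Omega> w = total_variation \<nu> \<Omega> w"
        using w(1) by (auto simp: TVN_def split: if_splits)
      obtain t where t: "total_variation \<nu> \<Omega> w = ennreal t" "0 \<le> t"
        using False tv by (cases "total_variation \<nu> \<Omega> w") auto
      have "mean \<nu> \<Omega> w = 0" using w(3) by (simp add: mean_def)
      then have "ennreal n \<le> ennreal C * ennreal t"
        using PC[OF bv w(1)] t by (simp add: n_def)
      then have "n \<le> C * t" using C t by (simp add: ennreal_mult[symmetric])
      then have "1/C \<le> t/n" using C n by (simp add: field_simps)
      then have "ennreal (1/C) \<le> ennreal (t/n)" by (rule ennreal_leI)
      also have "ennreal (t/n) = TVN \<nu> \<Omega> w / ennreal (l2norm \<nu> \<Omega> w)"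
        using tv t n by (simp add: n_def divide_ennreal)
      finally show ?thesis .
    qed
  qed
  moreover have "0 < ennreal (1/C)" using C by simp
  ultimately show ?thesis by order
qed

lemma extinction_bound:
  assumes sol: "TV_Neumann_solution \<nu> \<Omega> u0 u" and u0: "memL2 \<nu> \<Omega> u0"
    and lam: "0 < lam" "ennreal lam \<le> lambda1_TVN \<nu> \<Omega>" and mu: "measure \<nu> \<Omega> > 0"
  shows "extinction_time \<nu> \<Omega> u0 u \<le> ennreal (l2norm \<nu> \<Omega> u0 / lam)"
proof -
  define c where "c = mean \<nu> \<Omega> u0"
  define \<mu> where "\<mu> = measure \<nu> \<Omega>"
  have cdef: "c = integral\<^sup>L M u0 / \<mu>" by (simp add: c_def mean_def intM \<mu>_def)
  have L2t: "\<And>t. 0 \<le> t \<Longrightarrow> memL2 \<nu> \<Omega> (u t)" using sol by (simp add: TV_Neumann_solution_def)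
  have init: "AE x in \<nu>. x \<in> \<Omega> \<longrightarrow> u 0 x = u0 x" using sol by (simp add: TV_Neumann_solution_def)
  have ACt: "\<And>T. 0 < T \<Longrightarrow> abs_cont_L2 \<nu> \<Omega> u T" using sol by (simp add: TV_Neumann_solution_def)
  have AEd: "\<And>T. 0 < T \<Longrightarrow> AE t in lborel. 0 < t \<and> t < T \<longrightarrow>
      (\<exists>v. has_L2_deriv \<nu> \<Omega> u v t \<and> (\<lambda>x. - v x) \<in> subdiff_TVN \<nu> \<Omega> (u t))"
    using sol by (simp add: TV_Neumann_solution_def)
  define N1 where "N1 = l2norm \<nu> \<Omega> (\<lambda>x. 1)"
  have N1: "0 \<le> N1" by (simp add: N1_def l2norm_nonneg)
  have uh: "\<And>s h. 0 < s \<Longrightarrow> 0 < h \<Longrightarrow> memL2 \<nu> \<Omega> (u (s + h))" using L2t by simp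
  have F0: "integral\<^sup>L M (u 0) = integral\<^sup>L M u0"
  proof (rule integral_cong_AE)
    show "u 0 \<in> borel_measurable M" using L2t[of 0] by (intro measM) (simp add: memL2_def)
    show "u0 \<in> borel_measurable M" using u0 by (intro measM) (simp add: memL2_def)
    show "AE x in M. u 0 x = u0 x" using init by (simp add: AE_restrict_space_iff[OF Om'])
  qed
  have meanc: "integral\<^sup>L M (u t) = integral\<^sup>L M u0" if t: "0 \<le> t" for t
  proof (cases "t = 0")
    case True then show ?thesis using F0 by simp
  next
    case False
    then have t0: "0 < t" using t by simp
    define F where "F s = integral\<^sup>L M (u s)" for s
    define T where "T = t + 1"
    have T: "0 < T" "t \<le> T" using t by (auto simp: T_def)
    have bnd: "\<bar>F s - F s'\<bar> \<le> N1 * l2norm \<nu> \<Omega> (\<lambda>x. u s x - u s' x) + 0 * \<bar>s - s'\<bar>"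
      if "s \<in> {0..T}" "s' \<in> {0..T}" for s s'
    proof -
      have a: "memL2 \<nu> \<Omega> (u s)" "memL2 \<nu> \<Omega> (u s')" using that L2t by auto
      have "F s - F s' = integral\<^sup>L M (\<lambda>x. u s x - u s' x)"
        unfolding F_def using L2_int[OF a(1)] L2_int[OF a(2)] by simp
      then show ?thesis using int_bound[OF L2_diff[OF a]] by (simp add: N1_def)
    qed
    have bnd': "\<bar>(- F s) - (- F s')\<bar> \<le> N1 * l2norm \<nu> \<Omega> (\<lambda>x. u s x - u s' x) + 0 * \<bar>s - s'\<bar>"
      if "s \<in> {0..T}" "s' \<in> {0..T}" for s s'
      using bnd[OF that] by simp
    have acF: "acr F 0 t" by (rule acr_L2[OF ACt[OF T(1)] N1 _ bnd]) (use T in auto)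
    have acF': "acr (\<lambda>s. - F s) 0 t" by (rule acr_L2[OF ACt[OF T(1)] N1 _ bnd']) (use T in auto)
    have dini: "AE s in lborel. 0 < s \<and> s < t \<longrightarrow>
        (\<forall>\<epsilon>>0. \<exists>\<eta>>0. \<forall>h. 0 < h \<and> h < \<eta> \<longrightarrow> \<bar>F (s + h) - F s\<bar> \<le> \<epsilon> * h)"
      using AEd[OF T(1)]
    proof (rule AE_mp, intro AE_I2 impI allI)
      fix s \<epsilon> :: real
      assume H: "0 < s \<and> s < T \<longrightarrow> (\<exists>v. has_L2_deriv \<nu> \<Omega> u v s \<and> (\<lambda>x. - v x) \<in> subdiff_TVN \<nu> \<Omega> (u s))"
        and s: "0 < s \<and> s < t" and e: "0 < \<epsilon>"
      then obtain v where v: "has_L2_deriv \<nu> \<Omega> u v s" "(\<lambda>x. - v x) \<in> subdiff_TVN \<nu> \<Omega> (u s)"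
        using T by auto
      show "\<exists>\<eta>>0. \<forall>h. 0 < h \<and> h < \<eta> \<longrightarrow> \<bar>F (s + h) - F s\<bar> \<le> \<epsilon> * h"
        unfolding F_def
      proof (rule dini_mean)
        show "memL2 \<nu> \<Omega> (u s)" using L2t s by simp
        show "memL2 \<nu> \<Omega> v" using v(1) by (simp add: has_L2_deriv_def)
        show "memL2 \<nu> \<Omega> (u (s + h))" if "h > 0" for h using uh s that by simp
        show "((\<lambda>h. l2norm \<nu> \<Omega> (\<lambda>x. (u (s + h) x - u s x) / h - v x)) \<longlongrightarrow> 0) (at 0)"
          using v(1) by (simp add: has_L2_deriv_def)
        show "integral\<^sup>L M v = 0" by (rule sd_mean[OF v(2)])
      qed (rule e)
    qed
    have "F t \<le> F 0"
    proof (rule acr_mono[OF acF])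
      show "0 \<le> t" using t .
      show "AE s in lborel. 0 < s \<and> s < t \<longrightarrow>
          (\<forall>\<epsilon>>0. \<exists>\<eta>>0. \<forall>h. 0 < h \<and> h < \<eta> \<longrightarrow> F (s + h) - F s \<le> \<epsilon> * h)"
        using dini
      proof (rule AE_mp, intro AE_I2 impI allI)
        fix s \<epsilon> :: real
        assume D: "0 < s \<and> s < t \<longrightarrow> (\<forall>\<epsilon>>0. \<exists>\<eta>>0. \<forall>h. 0 < h \<and> h < \<eta> \<longrightarrow> \<bar>F (s + h) - F s\<bar> \<le> \<epsilon> * h)"
          and s: "0 < s \<and> s < t" and e: "0 < \<epsilon>"
        then obtain \<eta> where "\<eta> > 0" "\<forall>h. 0 < h \<and> h < \<eta> \<longrightarrow> \<bar>F (s + h) - F s\<bar> \<le> \<epsilon> * h" by blast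
        then show "\<exists>\<eta>>0. \<forall>h. 0 < h \<and> h < \<eta> \<longrightarrow> F (s + h) - F s \<le> \<epsilon> * h" by (meson abs_le_D1)
      qed
    qed
    moreover have "- F t \<le> - F 0"
    proof (rule acr_mono[OF acF'])
      show "0 \<le> t" using t .
      show "AE s in lborel. 0 < s \<and> s < t \<longrightarrow>
          (\<forall>\<epsilon>>0. \<exists>\<eta>>0. \<forall>h. 0 < h \<and> h < \<eta> \<longrightarrow> - F (s + h) - - F s \<le> \<epsilon> * h)"
        using dini
      proof (rule AE_mp, intro AE_I2 impI allI)
        fix s \<epsilon> :: real
        assume D: "0 < s \<and> s < t \<longrightarrow> (\<forall>\<epsilon>>0. \<exists>\<eta>>0. \<forall>h. 0 < h \<and> h < \<eta> \<longrightarrow> \<bar>F (s + h) - F s\<bar> \<le> \<epsilon> * h)"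
          and s: "0 < s \<and> s < t" and e: "0 < \<epsilon>"
        then obtain \<eta> where "\<eta> > 0" "\<forall>h. 0 < h \<and> h < \<eta> \<longrightarrow> \<bar>F (s + h) - F s\<bar> \<le> \<epsilon> * h" by blast
        then show "\<exists>\<eta>>0. \<forall>h. 0 < h \<and> h < \<eta> \<longrightarrow> - F (s + h) - - F s \<le> \<epsilon> * h"
          by (auto simp: abs_le_iff)
      qed
    qed
    ultimately show ?thesis using F0 by (simp add: F_def)
  qed
  have mu_pos: "\<mu> > 0" using mu by (simp add: \<mu>_def)
  define \<psi> where "\<psi> s = l2norm \<nu> \<Omega> (\<lambda>x. u s x - c)" for s
  have psi0: "0 \<le> \<psi> s" for s by (simp add: \<psi>_def l2norm_nonneg)
  have Wt: "memL2 \<nu> \<Omega> (\<lambda>x. u s x - c)" if "0 \<le> s" for s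
    using L2_diff[OF L2t[OF that] L2_const] .
  have psi_lip: "\<bar>\<psi> s - \<psi> s'\<bar> \<le> l2norm \<nu> \<Omega> (\<lambda>x. u s x - u s' x)" if "0 \<le> s" "0 \<le> s'" for s s'
  proof -
    have a: "memL2 \<nu> \<Omega> (u s)" "memL2 \<nu> \<Omega> (u s')" using that L2t by auto
    have "\<psi> s = l2norm \<nu> \<Omega> (\<lambda>x. (u s' x - c) + (u s x - u s' x))" by (simp add: \<psi>_def)
    also have "\<dots> \<le> \<psi> s' + l2norm \<nu> \<Omega> (\<lambda>x. u s x - u s' x)"
      unfolding \<psi>_def by (rule l2norm_tri[OF Wt[OF that(2)] L2_diff[OF a]])
    finally have 1: "\<psi> s \<le> \<psi> s' + l2norm \<nu> \<Omega> (\<lambda>x. u s x - u s' x)" .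
    have "\<psi> s' = l2norm \<nu> \<Omega> (\<lambda>x. (u s x - c) + (u s' x - u s x))" by (simp add: \<psi>_def)
    also have "\<dots> \<le> \<psi> s + l2norm \<nu> \<Omega> (\<lambda>x. u s' x - u s x)"
      unfolding \<psi>_def by (rule l2norm_tri[OF Wt[OF that(1)] L2_diff[OF a(2,1)]])
    also have "l2norm \<nu> \<Omega> (\<lambda>x. u s' x - u s x) = l2norm \<nu> \<Omega> (\<lambda>x. u s x - u s' x)"
      by (rule l2norm_swap[OF a])
    finally have 2: "\<psi> s' \<le> \<psi> s + l2norm \<nu> \<Omega> (\<lambda>x. u s x - u s' x)" .
    show ?thesis using 1 2 by linarith
  qed
  define G where "G s = \<psi> s + lam * s" for s
  have acpsi: "acr \<psi> a b" if "0 \<le> a" "0 < T" "b \<le> T" for a b T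
  proof (rule acr_L2[OF ACt[OF that(2)], of 1 0])
    show "\<bar>\<psi> s - \<psi> s'\<bar> \<le> 1 * l2norm \<nu> \<Omega> (\<lambda>x. u s x - u s' x) + 0 * \<bar>s - s'\<bar>"
      if "s \<in> {0..T}" "s' \<in> {0..T}" for s s' using psi_lip[of s s'] that by simp
  qed (use that in auto)
  have acG: "acr G a b" if "0 \<le> a" "0 < T" "b \<le> T" for a b T
  proof (rule acr_L2[OF ACt[OF that(2)], of 1 lam])
    show "\<bar>G s - G s'\<bar> \<le> 1 * l2norm \<nu> \<Omega> (\<lambda>x. u s x - u s' x) + lam * \<bar>s - s'\<bar>"
      if "s \<in> {0..T}" "s' \<in> {0..T}" for s s'
    proof -
      have "\<bar>G s - G s'\<bar> \<le> \<bar>\<psi> s - \<psi> s'\<bar> + \<bar>lam * s - lam * s'\<bar>" unfolding G_def by linarith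
      also have "\<bar>lam * s - lam * s'\<bar> = lam * \<bar>s - s'\<bar>"
        using lam(1) by (simp add: right_diff_distrib[symmetric] abs_mult)
      finally show ?thesis using psi_lip[of s s'] that by simp
    qed
  qed (use that lam in auto)
  have dG: "\<forall>\<epsilon>>0. \<exists>\<eta>>0. \<forall>h. 0 < h \<and> h < \<eta> \<longrightarrow> G (s + h) - G s \<le> \<epsilon> * h"
    if s: "0 < s" and v: "has_L2_deriv \<nu> \<Omega> u v s" "(\<lambda>x. - v x) \<in> subdiff_TVN \<nu> \<Omega> (u s)"
      and pos: "\<psi> s > 0" for s v
  proof (intro allI impI)
    fix \<epsilon> :: real assume e: "\<epsilon> > 0"
    have us: "memL2 \<nu> \<Omega> (u s)" using L2t s by simp
    have vL2: "memL2 \<nu> \<Omega> v" using v(1) by (simp add: has_L2_deriv_def)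
    have sdc: "integral\<^sup>L M (\<lambda>x. v x * (u s x - c)) \<le> - enn2real (TVN \<nu> \<Omega> (u s))"
      by (rule sd_const[OF v(2)])
    define W where "W = (\<lambda>x. u s x - c)"
    have WL2: "memL2 \<nu> \<Omega> W" using Wt s by (simp add: W_def)
    have "integral\<^sup>L M W = integral\<^sup>L M (u s) - c * \<mu>"
      unfolding W_def using L2_int[OF us] int1 by (simp add: \<mu>_def)
    also have "\<dots> = 0" using meanc[of s] s mu_pos by (simp add: cdef)
    finally have W0: "integral\<^sup>L M W = 0" .
    have "ennreal (lam * l2norm \<nu> \<Omega> W) \<le> TVN \<nu> \<Omega> W"
      by (rule lam_bound[OF lam(2) _ WL2 W0]) (use lam in simp)
    also have "TVN \<nu> \<Omega> W = TVN \<nu> \<Omega> (u s)"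
      using TVN_shift[of "u s" "-c"] by (simp add: W_def)
    finally have le: "ennreal (lam * \<psi> s) \<le> TVN \<nu> \<Omega> (u s)" by (simp add: \<psi>_def W_def)
    have fin: "TVN \<nu> \<Omega> (u s) \<noteq> \<infinity>" by (rule sd_basic(3)[OF v(2)])
    obtain r where r: "TVN \<nu> \<Omega> (u s) = ennreal r" "0 \<le> r" using fin by (cases "TVN \<nu> \<Omega> (u s)") auto
    have "lam * \<psi> s \<le> r" using le r by simp
    then have I: "integral\<^sup>L M (\<lambda>x. (u s x - c) * v x) \<le> - lam * l2norm \<nu> \<Omega> (\<lambda>x. u s x - c)"
      using sdc r by (simp add: \<psi>_def mult.commute)
    obtain \<eta> where "\<eta> > 0" and H: "\<forall>h. 0 < h \<and> h < \<eta> \<longrightarrow>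
     (l2norm \<nu> \<Omega> (\<lambda>x. u (s + h) x - c) + lam * (s + h)) - (l2norm \<nu> \<Omega> (\<lambda>x. u s x - c) + lam * s) \<le> \<epsilon> * h"
    proof (rule exE[OF dini_psi[where u=u and s=s and v=v and c=c and lam=lam, OF us vL2 _ _ _ _ I e]])
      show "memL2 \<nu> \<Omega> (u (s + h))" if "h > 0" for h using uh s that by simp
      show "((\<lambda>h. l2norm \<nu> \<Omega> (\<lambda>x. (u (s + h) x - u s x) / h - v x)) \<longlongrightarrow> 0) (at 0)"
        using v(1) by (simp add: has_L2_deriv_def)
      show "0 < l2norm \<nu> \<Omega> (\<lambda>x. u s x - c)" using pos by (simp add: \<psi>_def)
      show "0 \<le> lam" using lam by simp
    qed blast
    then show "\<exists>\<eta>>0. \<forall>h. 0 < h \<and> h < \<eta> \<longrightarrow> G (s + h) - G s \<le> \<epsilon> * h"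
      unfolding G_def \<psi>_def by blast
  qed
  have monoG: "G b \<le> G a" if ab: "0 \<le> a" "a \<le> b" and posab: "\<forall>s\<in>{a..b}. \<psi> s > 0" for a b
  proof -
    define T where "T = b + 1"
    have T: "0 < T" "b \<le> T" using ab by (auto simp: T_def)
    show ?thesis
    proof (rule acr_mono[OF acG[OF ab(1) T(1) T(2)] ab(2)])
      show "AE s in lborel. a < s \<and> s < b \<longrightarrow>
          (\<forall>\<epsilon>>0. \<exists>\<eta>>0. \<forall>h. 0 < h \<and> h < \<eta> \<longrightarrow> G (s + h) - G s \<le> \<epsilon> * h)"
        using AEd[OF T(1)]
      proof (rule AE_mp, intro AE_I2 impI)
        fix s assume H: "0 < s \<and> s < T \<longrightarrow> (\<exists>v. has_L2_deriv \<nu> \<Omega> u v s \<and> (\<lambda>x. - v x) \<in> subdiff_TVN \<nu> \<Omega> (u s))"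
          and s: "a < s \<and> s < b"
        then obtain v where v: "has_L2_deriv \<nu> \<Omega> u v s" "(\<lambda>x. - v x) \<in> subdiff_TVN \<nu> \<Omega> (u s)"
          using ab T by auto
        have "0 < s" using s ab by simp
        moreover have "\<psi> s > 0" using posab s by auto
        ultimately show "\<forall>\<epsilon>>0. \<exists>\<eta>>0. \<forall>h. 0 < h \<and> h < \<eta> \<longrightarrow> G (s + h) - G s \<le> \<epsilon> * h"
          using dG v by blast
      qed
    qed
  qed
  have stepD: "lam * t0 < \<psi> 0" if t0: "0 < t0" and pt: "\<psi> t0 > 0" for t0
  proof -
    define Z where "Z = {s \<in> {0..t0}. \<psi> s = 0}"
    show ?thesis
    proof (cases "Z = {}")
      case True
      then have "\<forall>s\<in>{0..t0}. \<psi> s > 0" using psi0 unfolding Z_def by (auto simp: order_less_le)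
      then have "G t0 \<le> G 0" using t0 by (intro monoG) auto
      then show ?thesis using pt by (simp add: G_def)
    next
      case False
      define z where "z = Sup Z"
      have bddZ: "bdd_above Z" unfolding Z_def by (auto intro: bdd_aboveI[of _ t0])
      have zle: "z \<le> t0" unfolding z_def using False by (intro cSup_least) (auto simp: Z_def)
      have zge: "0 \<le> z"
      proof -
        obtain s where "s \<in> Z" using False by blast
        then have "s \<le> z" unfolding z_def using bddZ by (intro cSup_upper)
        then show ?thesis using \<open>s \<in> Z\<close> by (auto simp: Z_def)
      qed
      have T: "0 < t0 + 1" "t0 \<le> t0 + 1" using t0 by auto
      have acp: "acr \<psi> 0 (t0 + 1)" by (rule acpsi[of 0 "t0 + 1" "t0 + 1"]) (use t0 in auto)
      have pz: "\<psi> z = 0"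
      proof (rule ccontr)
        assume "\<psi> z \<noteq> 0"
        then have "\<psi> z > 0" using psi0[of z] by simp
        obtain d where d: "d > 0" "\<And>y. y \<in> {0..t0+1} \<Longrightarrow> \<bar>y - z\<bar> < d \<Longrightarrow> \<bar>\<psi> y - \<psi> z\<bar> < \<psi> z"
          using acr_cont[OF acp _ \<open>\<psi> z > 0\<close>, of z] zge zle by (meson atLeastAtMost_iff le_add_same_cancel1 order_trans zero_le_one)
        have "z - d < Sup Z" using d(1) z_def by simp
        then obtain s where s: "s \<in> Z" "z - d < s" using False by (auto elim: less_cSupE)
        have "s \<le> z" unfolding z_def using s(1) bddZ by (rule cSup_upper)
        then have "\<bar>\<psi> s - \<psi> z\<bar> < \<psi> z" using d(2)[of s] s by (auto simp: Z_def)
        then show False using s(1) by (simp add: Z_def)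
      qed
      have zlt: "z < t0" using zle pz pt by (cases "z = t0") auto
      obtain d where d: "d > 0" "\<And>y. y \<in> {0..t0+1} \<Longrightarrow> \<bar>y - z\<bar> < d \<Longrightarrow> \<bar>\<psi> y - \<psi> z\<bar> < \<psi> t0 / 2"
        using acr_cont[OF acp _ , of z "\<psi> t0 / 2"] zge zle pt by auto
      define z' where "z' = z + min (d/2) ((t0 - z)/2)"
      have z': "z < z'" "z' < t0" "\<bar>z' - z\<bar> < d" using d(1) zlt by (auto simp: z'_def min_def field_simps)
      have posz: "\<forall>s\<in>{z'..t0}. \<psi> s > 0"
      proof
        fix s assume s: "s \<in> {z'..t0}"
        show "\<psi> s > 0"
        proof (rule ccontr)
          assume "\<not> \<psi> s > 0"
          then have "s \<in> Z" using psi0[of s] s zge z' by (auto simp: Z_def)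
          then have "s \<le> z" unfolding z_def using bddZ by (rule cSup_upper)
          then show False using s z' by auto
        qed
      qed
      have "G t0 \<le> G z'" by (rule monoG) (use zge z' posz in auto)
      then have "\<psi> t0 \<le> \<psi> z'" using lam z' by (simp add: G_def) (smt (verit) mult_left_mono)
      moreover have "\<bar>\<psi> z' - \<psi> z\<bar> < \<psi> t0 / 2" using d(2)[of z'] z' zge zlt by auto
      ultimately show ?thesis using pz pt by simp
    qed
  qed
  have psi_init: "\<psi> 0 \<le> l2norm \<nu> \<Omega> u0"
  proof -
    have "\<psi> 0 = l2norm \<nu> \<Omega> (\<lambda>x. u0 x + (- c) * 1)"
      unfolding \<psi>_def by (rule l2norm_cong) (use init in \<open>auto elim!: eventually_mono\<close>)
    then have "(\<psi> 0)\<^sup>2 = (l2norm \<nu> \<Omega> u0)\<^sup>2 + 2 * (- c) * integral\<^sup>L M (\<lambda>x. u0 x * 1) + (- c)\<^sup>2 * (l2norm \<nu> \<Omega> (\<lambda>x. 1))\<^sup>2"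
      using l2norm_expand[OF u0 L2_const, of "-c" 1] by simp
    also have "(l2norm \<nu> \<Omega> (\<lambda>x. 1))\<^sup>2 = \<mu>" using l2norm_sq[OF L2_const, of 1] int1 by (simp add: \<mu>_def)
    also have "integral\<^sup>L M (\<lambda>x. u0 x * 1) = c * \<mu>" using cdef mu_pos by simp
    finally have "(\<psi> 0)\<^sup>2 = (l2norm \<nu> \<Omega> u0)\<^sup>2 - c\<^sup>2 * \<mu>" by (simp add: power2_eq_square algebra_simps)
    also have "\<dots> \<le> (l2norm \<nu> \<Omega> u0)\<^sup>2" using mu_pos by simp
    finally show ?thesis using l2norm_nonneg[of u0] by (rule power2_le_imp_le)
  qed
  have inset: "\<psi> 0 / lam + \<eta> \<in> {T. T > 0 \<and> (\<forall>t\<ge>T. AE x in \<nu>. x \<in> \<Omega> \<longrightarrow> u t x = mean \<nu> \<Omega> u0)}"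
    if eta: "\<eta> > 0" for \<eta>
  proof -
    have Tpos: "\<psi> 0 / lam + \<eta> > 0" using psi0[of 0] lam eta by (simp add: add_nonneg_pos)
    have "AE x in \<nu>. x \<in> \<Omega> \<longrightarrow> u t x = mean \<nu> \<Omega> u0" if t: "t \<ge> \<psi> 0 / lam + \<eta>" for t
    proof -
      have tpos: "0 < t" using t Tpos by simp
      have "\<psi> t = 0"
      proof (rule ccontr)
        assume "\<psi> t \<noteq> 0"
        then have "\<psi> t > 0" using psi0[of t] by simp
        then have "lam * t < \<psi> 0" by (rule stepD[OF tpos])
        then have "t < \<psi> 0 / lam" using lam by (simp add: field_simps)
        then show False using t eta by simp
      qed
      then have "AE x in \<nu>. x \<in> \<Omega> \<longrightarrow> u t x - c = 0"
        using l2norm_zero[OF Wt] tpos unfolding \<psi>_def by simp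
      then show ?thesis by (rule eventually_mono) (simp add: c_def)
    qed
    then show ?thesis using Tpos by simp
  qed
  have "extinction_time \<nu> \<Omega> u0 u \<le> ennreal (\<psi> 0 / lam)"
  proof (rule ennreal_le_epsilon)
    fix \<eta> :: real assume eta: "0 < \<eta>"
    have "extinction_time \<nu> \<Omega> u0 u \<le> ennreal (\<psi> 0 / lam + \<eta>)"
      unfolding extinction_time_def by (rule Inf_lower) (use inset[OF eta] in blast)
    also have "\<dots> = ennreal (\<psi> 0 / lam) + ennreal \<eta>"
      using psi0[of 0] lam eta by (simp add: ennreal_plus)
    finally show "extinction_time \<nu> \<Omega> u0 u \<le> ennreal (\<psi> 0 / lam) + ennreal \<eta>" .
  qed
  also have "\<dots> \<le> ennreal (l2norm \<nu> \<Omega> u0 / lam)"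
    using psi_init lam by (intro ennreal_leI divide_right_mono) auto
  finally show ?thesis .
qed


end


theorem mainTheorem4:
  fixes \<nu> :: "'a::polish_space measure" and \<Omega> :: "'a set"
    and u0 :: "'a \<Rightarrow> real" and u :: "real \<Rightarrow> 'a \<Rightarrow> real"
  assumes "standing_setting \<nu> \<Omega>"
    and "\<exists>C>0. \<forall>w. memBV \<nu> \<Omega> w \<and> memL2 \<nu> \<Omega> w \<longrightarrow>
           ennreal (l2norm \<nu> \<Omega> (\<lambda>x. w x - mean \<nu> \<Omega> w)) \<le> ennreal C * total_variation \<nu> \<Omega> w"
    and "memL2 \<nu> \<Omega> u0"
    and "TV_Neumann_solution \<nu> \<Omega> u0 u"
  shows "lambda1_TVN \<nu> \<Omega> > 0 \<and>
         extinction_time \<nu> \<Omega> u0 u \<le> ennreal (l2norm \<nu> \<Omega> u0) / lambda1_TVN \<nu> \<Omega>"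
proof -
  have dr: "doubling_radon \<nu>" and rd: "regular_domain \<nu> \<Omega>"
    using assms(1) by (auto simp: standing_setting_def)
  have sets_eq: "sets \<nu> = sets borel" using dr by (simp add: doubling_radon_def)
  have ballfin: "0 < emeasure \<nu> (ball x r) \<and> emeasure \<nu> (ball x r) < \<infinity>" if "r > 0" for x r
    using dr that by (simp add: doubling_radon_def)
  have opn: "open \<Omega>" "\<Omega> \<noteq> {}" "bounded \<Omega>" using rd by (auto simp: regular_domain_def)
  have Om: "\<Omega> \<in> sets \<nu>" using sets_eq borel_open[OF opn(1)] by simp
  obtain x0 where x0: "x0 \<in> \<Omega>" using opn(2) by blast
  obtain r where r: "0 < r" "\<Omega> \<subseteq> ball x0 r" using bounded_subset_ballD[OF opn(3)] by blast
  have bsets: "ball x r' \<in> sets \<nu>" for x r' using sets_eq by simp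
  have fin: "emeasure \<nu> \<Omega> < \<infinity>"
  proof -
    have "emeasure \<nu> \<Omega> \<le> emeasure \<nu> (ball x0 r)" by (rule emeasure_mono[OF r(2) bsets])
    also have "\<dots> < \<infinity>" using ballfin[OF r(1)] by simp
    finally show ?thesis .
  qed
  interpret D: dom \<nu> \<Omega> by unfold_locales (use Om fin opn(1) in auto)
  have mu: "measure \<nu> \<Omega> > 0"
  proof -
    obtain e where e: "e > 0" "ball x0 e \<subseteq> \<Omega>" using opn(1) x0 open_contains_ball by blast
    have "0 < emeasure \<nu> (ball x0 e)" using ballfin[OF e(1)] by simp
    also have "\<dots> \<le> emeasure \<nu> \<Omega>" by (rule emeasure_mono[OF e(2) Om])
    finally have "0 < emeasure \<nu> \<Omega>" .
    then show ?thesis using fin by (simp add: measure_def enn2real_positive_iff)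
  qed
  have lpos: "lambda1_TVN \<nu> \<Omega> > 0" by (rule D.lambda_pos[OF assms(2)])
  have N0: "0 \<le> l2norm \<nu> \<Omega> u0" by (rule D.l2norm_nonneg)
  have ext: "extinction_time \<nu> \<Omega> u0 u \<le> ennreal (l2norm \<nu> \<Omega> u0) / lambda1_TVN \<nu> \<Omega>"
  proof (cases "lambda1_TVN \<nu> \<Omega> = \<infinity>")
    case True
    have "extinction_time \<nu> \<Omega> u0 u \<le> 0"
    proof (rule ennreal_le_epsilon)
      fix e :: real assume e: "0 < e"
      define lam where "lam = (l2norm \<nu> \<Omega> u0 + 1) / e"
      have lam: "0 < lam" using e N0 by (simp add: lam_def)
      have "extinction_time \<nu> \<Omega> u0 u \<le> ennreal (l2norm \<nu> \<Omega> u0 / lam)"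
        by (rule D.extinction_bound[OF assms(4,3) lam _ mu]) (simp add: True)
      also have "l2norm \<nu> \<Omega> u0 / lam \<le> e"
      proof -
        have "l2norm \<nu> \<Omega> u0 / lam = l2norm \<nu> \<Omega> u0 * e / (l2norm \<nu> \<Omega> u0 + 1)"
          using e N0 by (simp add: lam_def)
        also have "\<dots> \<le> e" using e N0 by (simp add: field_simps)
        finally show ?thesis .
      qed
      then have "ennreal (l2norm \<nu> \<Omega> u0 / lam) \<le> 0 + ennreal e" by (simp add: ennreal_leI)
      finally show "extinction_time \<nu> \<Omega> u0 u \<le> 0 + ennreal e" .
    qed
    then show ?thesis by simp
  next
    case False
    then obtain L where L: "lambda1_TVN \<nu> \<Omega> = ennreal L" "0 \<le> L"
      by (cases "lambda1_TVN \<nu> \<Omega>") auto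
    have Lpos: "0 < L" using lpos L by simp
    have "extinction_time \<nu> \<Omega> u0 u \<le> ennreal (l2norm \<nu> \<Omega> u0 / L)"
      by (rule D.extinction_bound[OF assms(4,3) Lpos _ mu]) (simp add: L)
    also have "\<dots> = ennreal (l2norm \<nu> \<Omega> u0) / lambda1_TVN \<nu> \<Omega>"
      using L Lpos N0 by (simp add: divide_ennreal)
    finally show ?thesis .
  qed
  show ?thesis using lpos ext by simp
qed

end
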